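(* Let $G_1,G_2$ be bridgeless cubic graphs, $x_1y_1\in E(G_1)$, $x_2y_2\in E(G_2)$, and $G=(G_1,x_1y_1)\oplus(G_2,x_2y_2)$. Then: (i) Suppose $x_1y_1$ is lonely in $G_1$, and let $e\neq x_2y_2$ be a lonely edge of $G_2$. Then $e$ is lonely in $G$ if and only if $x_2y_2$ belongs to the unique perfect matching of $G_2$ containing $e$. Moreover, if (in addition to $x_1y_1$ being lonely in $G_1$) $x_2y_2$ is lonely in $G_2$, then both $x_1x_2$ and $y_1y_2$ are lonely in $G$. (ii) Suppose $x_1y_1$ is not lonely in $G_1$. Then no edge of $E(G_2)\setminus\{x_2y_2\}$ is lonely in $G$, and neither $x_1x_2$ nor $y_1y_2$ is lonely in $G$. (iii) For each $i\in\{1,2\}$, if an edge of $G_i$ different from $x_iy_i$ is not lonely in $G_i$, then it is not lonely in $G$.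
   Context: Graphs may have parallel edges. In a bridgeless cubic graph, an edge is lonely if it belongs to exactly one perfect matching. A 2-cut-connection of bridgeless cubic graphs $G_1,G_2$ along edges $x_1y_1\in E(G_1)$, $x_2y_2\in E(G_2)$ is the graph $(G_1,x_1y_1)\oplus(G_2,x_2y_2)$ obtained from the disjoint union of $G_1$ and $G_2$ by deleting $x_1y_1$ and $x_2y_2$ and adding the edges $x_1x_2$ and $y_1y_2$. Edges of $G_i$ other than $x_iy_i$ are identified with the corresponding edges of $G$. *)

theory Defs
  imports Main
begin

text \<open>Finite loopless multigraphs: edges are abstract identifiers, each with a
  two-element set of end vertices (parallel edges allowed).\<close>

record ('v,'e) mgraph =
  verts :: "'v set"
  edges :: "'e set"
  ends  :: "'e \<Rightarrow> 'v set"

definition mgraph :: "('v,'e) mgraph \<Rightarrow> bool" where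
  "mgraph G \<longleftrightarrow> finite (verts G) \<and> finite (edges G) \<and>
     (\<forall>e\<in>edges G. ends G e \<subseteq> verts G \<and> card (ends G e) = 2)"

definition degree :: "('v,'e) mgraph \<Rightarrow> 'v \<Rightarrow> nat" where
  "degree G v = card {e\<in>edges G. v \<in> ends G e}"

definition cubic :: "('v,'e) mgraph \<Rightarrow> bool" where
  "cubic G \<longleftrightarrow> mgraph G \<and> (\<forall>v\<in>verts G. degree G v = 3)"

definition adj_in :: "('v,'e) mgraph \<Rightarrow> 'e set \<Rightarrow> 'v \<Rightarrow> 'v \<Rightarrow> bool" where
  "adj_in G F u v \<longleftrightarrow> (\<exists>e\<in>F. e \<in> edges G \<and> ends G e = {u, v} \<and> u \<noteq> v)"

definition is_bridge :: "('v,'e) mgraph \<Rightarrow> 'e \<Rightarrow> bool" where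
  "is_bridge G e \<longleftrightarrow> e \<in> edges G \<and>
     (\<exists>u v. ends G e = {u, v} \<and> \<not> (adj_in G (edges G - {e}))\<^sup>*\<^sup>* u v)"

definition bridgeless :: "('v,'e) mgraph \<Rightarrow> bool" where
  "bridgeless G \<longleftrightarrow> (\<forall>e\<in>edges G. \<not> is_bridge G e)"

definition perfect_matching :: "('v,'e) mgraph \<Rightarrow> 'e set \<Rightarrow> bool" where
  "perfect_matching G M \<longleftrightarrow> M \<subseteq> edges G \<and>
     (\<forall>v\<in>verts G. card {e\<in>M. v \<in> ends G e} = 1)"

definition lonely :: "('v,'e) mgraph \<Rightarrow> 'e \<Rightarrow> bool" where
  "lonely G e \<longleftrightarrow> e \<in> edges G \<and> card {M. perfect_matching G M \<and> e \<in> M} = 1"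

text \<open>Edges of a 2-cut-connection: old edges of G1, old edges of G2, and the
  two new edges x1x2 (XX) and y1y2 (YY).\<close>
datatype ('a,'b) cedge = E1 'a | E2 'b | XX | YY

definition cut_conn ::
  "('v1,'e1) mgraph \<Rightarrow> 'e1 \<Rightarrow> 'v1 \<Rightarrow> 'v1 \<Rightarrow>
   ('v2,'e2) mgraph \<Rightarrow> 'e2 \<Rightarrow> 'v2 \<Rightarrow> 'v2 \<Rightarrow> ('v1 + 'v2, ('e1,'e2) cedge) mgraph" where
  "cut_conn G1 f1 x1 y1 G2 f2 x2 y2 =
     \<lparr> verts = Inl ` verts G1 \<union> Inr ` verts G2,
       edges = E1 ` (edges G1 - {f1}) \<union> E2 ` (edges G2 - {f2}) \<union> {XX, YY},
       ends = (\<lambda>e. case e of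
                  E1 a \<Rightarrow> Inl ` ends G1 a
                | E2 b \<Rightarrow> Inr ` ends G2 b
                | XX \<Rightarrow> {Inl x1, Inr x2}
                | YY \<Rightarrow> {Inl y1, Inr y2}) \<rparr>"

end

theory Submission
  imports Defs
begin

lemma card_filter_sum: "finite A \<Longrightarrow> card {x\<in>A. P x} = (\<Sum>x\<in>A. if P x then 1 else 0)"
  by (simp add: sum.inter_filter[symmetric])

lemma card_eq1_iff_ex1: "card {x. P x} = 1 \<longleftrightarrow> (\<exists>!x. P x)"
proof
  assume "card {x. P x} = 1"
  then obtain y where "{x. P x} = {y}" using card_1_singleton_iff by (metis One_nat_def)
  then show "\<exists>!x. P x" by (metis mem_Collect_eq singletonD singletonI)
next
  assume "\<exists>!x. P x"
  then obtain y where "P y" "\<And>z. P z \<Longrightarrow> z = y" by blast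
  then have "{x. P x} = {y}" by blast
  then show "card {x. P x} = 1" by simp
qed

lemma even_sum_iff:
  fixes f :: "'a \<Rightarrow> nat"
  assumes "finite S"
  shows "even (sum f S) \<longleftrightarrow> even (card {x\<in>S. odd (f x)})"
  using assms
proof (induction S rule: finite_induct)
  case empty then show ?case by simp
next
  case (insert x S)
  have fin: "finite {y\<in>S. odd (f y)}" using insert by simp
  have nx: "x \<notin> {y\<in>S. odd (f y)}" using insert by simp
  show ?case
  proof (cases "odd (f x)")
    case True
    then have "{y\<in>insert x S. odd (f y)} = insert x {y\<in>S. odd (f y)}" by auto
    then show ?thesis using insert True fin nx by simp
  next
    case False
    then have "{y\<in>insert x S. odd (f y)} = {y\<in>S. odd (f y)}" by auto
    then show ?thesis using insert False fin by simp
  qed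
qed

lemma double_count:
  assumes "finite W" "finite F"
  shows "(\<Sum>v\<in>W. card {e\<in>F. v \<in> h e}) = (\<Sum>e\<in>F. card (h e \<inter> W))"
proof -
  have "(\<Sum>v\<in>W. card {e\<in>F. v \<in> h e}) = (\<Sum>v\<in>W. \<Sum>e\<in>F. if v \<in> h e then 1 else 0)"
    using assms by (simp add: card_filter_sum)
  also have "\<dots> = (\<Sum>e\<in>F. \<Sum>v\<in>W. if v \<in> h e then 1 else 0)"
    by (rule sum.swap)
  also have "\<dots> = (\<Sum>e\<in>F. card {v\<in>W. v \<in> h e})"
    using assms by (simp add: card_filter_sum)
  also have "\<dots> = (\<Sum>e\<in>F. card (h e \<inter> W))"
    by (rule sum.cong) (auto intro: arg_cong[where f=card])
  finally show ?thesis .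
qed

definition rel_in :: "('a \<Rightarrow> 'a \<Rightarrow> bool) \<Rightarrow> 'a set \<Rightarrow> 'a \<Rightarrow> 'a \<Rightarrow> bool" where
  "rel_in A W u v \<longleftrightarrow> u \<in> W \<and> v \<in> W \<and> A u v"

definition comp :: "('a \<Rightarrow> 'a \<Rightarrow> bool) \<Rightarrow> 'a set \<Rightarrow> 'a \<Rightarrow> 'a set" where
  "comp A W x = {y. (rel_in A W)\<^sup>*\<^sup>* x y}"

definition comps :: "('a \<Rightarrow> 'a \<Rightarrow> bool) \<Rightarrow> 'a set \<Rightarrow> 'a set set" where
  "comps A W = comp A W ` W"

definition ocomps :: "('a \<Rightarrow> 'a \<Rightarrow> bool) \<Rightarrow> 'a set \<Rightarrow> 'a set set" where
  "ocomps A W = {C\<in>comps A W. odd (card C)}"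

definition tutte :: "('a \<Rightarrow> 'a \<Rightarrow> bool) \<Rightarrow> 'a set \<Rightarrow> bool" where
  "tutte A V \<longleftrightarrow> (\<forall>S\<subseteq>V. card (ocomps A (V - S)) \<le> card S)"

definition symr :: "('a \<Rightarrow> 'a \<Rightarrow> bool) \<Rightarrow> bool" where
  "symr A \<longleftrightarrow> (\<forall>u v. A u v \<longrightarrow> A v u)"

definition inv_pm :: "('a \<Rightarrow> 'a \<Rightarrow> bool) \<Rightarrow> 'a set \<Rightarrow> ('a \<Rightarrow> 'a) \<Rightarrow> bool" where
  "inv_pm A W p \<longleftrightarrow> (\<forall>v\<in>W. p v \<in> W \<and> p v \<noteq> v \<and> p (p v) = v \<and> A v (p v))"

lemma comp_sub: "x \<in> W \<Longrightarrow> comp A W x \<subseteq> W"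
proof
  fix y assume "x \<in> W" "y \<in> comp A W x"
  then have "(rel_in A W)\<^sup>*\<^sup>* x y" by (simp add: comp_def)
  then show "y \<in> W" using \<open>x \<in> W\<close>
    by (induction rule: rtranclp_induct) (auto simp: rel_in_def)
qed

lemma comp_self: "x \<in> comp A W x"
  by (simp add: comp_def)

lemma rel_in_sym: "symr A \<Longrightarrow> symp (rel_in A W)"
  by (auto simp: symr_def rel_in_def symp_def)

lemma comp_eq: assumes "symr A" "y \<in> comp A W x" shows "comp A W y = comp A W x"
proof -
  have s: "symp ((rel_in A W)\<^sup>*\<^sup>*)" using rel_in_sym[OF assms(1)] symp_rtranclp by blast
  have xy: "(rel_in A W)\<^sup>*\<^sup>* x y" using assms(2) by (simp add: comp_def)
  then have yx: "(rel_in A W)\<^sup>*\<^sup>* y x" using s by (meson sympD)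
  show ?thesis unfolding comp_def
    using xy yx by (auto intro: rtranclp_trans)
qed

lemma comps_eq_of_mem: assumes "symr A" "C \<in> comps A W" "y \<in> C" shows "C = comp A W y"
proof -
  obtain x where "x \<in> W" "C = comp A W x" using assms(2) unfolding comps_def by blast
  then show ?thesis using comp_eq[OF assms(1)] assms(3) by metis
qed

lemma comps_disj: assumes "symr A" "C1 \<in> comps A W" "C2 \<in> comps A W" "C1 \<noteq> C2" shows "C1 \<inter> C2 = {}"
proof (rule ccontr)
  assume "C1 \<inter> C2 \<noteq> {}"
  then obtain z where "z \<in> C1" "z \<in> C2" by blast
  have "C1 = comp A W z" using comps_eq_of_mem[OF assms(1) assms(2) \<open>z \<in> C1\<close>] .
  moreover have "C2 = comp A W z" using comps_eq_of_mem[OF assms(1) assms(3) \<open>z \<in> C2\<close>] .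
  ultimately show False using assms(4) by simp
qed

lemma comps_sub: assumes "C \<in> comps A W" shows "C \<subseteq> W"
proof -
  obtain x where "x \<in> W" "C = comp A W x" using assms unfolding comps_def by blast
  then show ?thesis using comp_sub[of x W A] by (simp only:)
qed

lemma Union_comps: "\<Union>(comps A W) = W"
proof
  show "\<Union>(comps A W) \<subseteq> W"
  proof
    fix y assume "y \<in> \<Union>(comps A W)"
    then obtain C where "C \<in> comps A W" "y \<in> C" by (rule UnionE)
    then show "y \<in> W" using comps_sub[of C A W] by (rule_tac subsetD)
  qed
  show "W \<subseteq> \<Union>(comps A W)"
  proof
    fix x assume "x \<in> W"
    then have "comp A W x \<in> comps A W" unfolding comps_def by (rule imageI)
    then show "x \<in> \<Union>(comps A W)" using comp_self[of x A W] by (rule UnionI)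
  qed
qed

lemma comps_closed: assumes "symr A" "C \<in> comps A W" "u \<in> C" "v \<in> W" "A u v" shows "v \<in> C"
proof -
  have C: "C = comp A W u" using comps_eq_of_mem[OF assms(1,2,3)] .
  have "u \<in> W" using assms(3) comps_sub[OF assms(2)] by blast
  then have "rel_in A W u v" using assms(4,5) by (simp add: rel_in_def)
  then have "v \<in> comp A W u" unfolding comp_def by (simp add: r_into_rtranclp)
  then show ?thesis using C by simp
qed

lemma comps_nonempty: assumes "C \<in> comps A W" shows "C \<noteq> {}"
proof -
  obtain x where "C = comp A W x" using assms unfolding comps_def by blast
  then show ?thesis using comp_self[of x A W] by auto
qed

lemma finite_comps: "finite W \<Longrightarrow> finite (comps A W)"
  unfolding comps_def by simp

lemma card_comps_sum: assumes "symr A" "finite W" shows "card W = sum card (comps A W)"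
proof -
  have "card (\<Union>(comps A W)) = sum card (comps A W)"
  proof (rule card_Union_disjoint)
    show "pairwise disjnt (comps A W)"
      unfolding pairwise_def disjnt_def
    proof (intro ballI impI)
      fix C1 C2 assume "C1 \<in> comps A W" "C2 \<in> comps A W" "C1 \<noteq> C2"
      then show "C1 \<inter> C2 = {}" by (rule comps_disj[OF assms(1)])
    qed
    show "\<And>C. C \<in> comps A W \<Longrightarrow> finite C"
    proof -
      fix C assume "C \<in> comps A W"
      then have "C \<subseteq> W" by (rule comps_sub)
      then show "finite C" using assms(2) by (rule finite_subset)
    qed
  qed
  then show ?thesis by (simp add: Union_comps)
qed

lemma even_card_ocomps: assumes "symr A" "finite W"
  shows "even (card W) \<longleftrightarrow> even (card (ocomps A W))"
  using card_comps_sum[OF assms] even_sum_iff[OF finite_comps[OF assms(2)], of card]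
  by (simp add: ocomps_def)

lemma finite_ocomps: "finite W \<Longrightarrow> finite (ocomps A W)"
  by (simp add: ocomps_def finite_comps)

lemma comp_mono: assumes "\<And>u v. A u v \<Longrightarrow> A' u v" shows "comp A W x \<subseteq> comp A' W x"
proof
  fix y assume "y \<in> comp A W x"
  then have "(rel_in A W)\<^sup>*\<^sup>* x y" by (simp add: comp_def)
  then have "(rel_in A' W)\<^sup>*\<^sup>* x y"
  proof (induction rule: rtranclp_induct)
    case base then show ?case by simp
  next
    case (step y z)
    then have "rel_in A' W y z" using assms by (simp add: rel_in_def)
    with step.IH show ?case by (rule rtranclp.rtrancl_into_rtrancl)
  qed
  then show "y \<in> comp A' W x" by (simp add: comp_def)
qed

lemma ocomps_mono:
  assumes sA: "symr A" and sA': "symr A'" and mono: "\<And>u v. A u v \<Longrightarrow> A' u v" and fin: "finite W"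
  shows "card (ocomps A' W) \<le> card (ocomps A W)"
proof -
  have ex: "\<exists>C\<in>ocomps A W. C \<subseteq> C'" if C': "C' \<in> ocomps A' W" for C'
  proof (rule ccontr)
    assume no: "\<not> (\<exists>C\<in>ocomps A W. C \<subseteq> C')"
    have C'c: "C' \<in> comps A' W" and oddC': "odd (card C')" using C' by (auto simp: ocomps_def)
    have subW: "C' \<subseteq> W" using C'c by (rule comps_sub)
    let ?F = "comp A W ` C'"
    have sub1: "comp A W y \<subseteq> C'" if "y \<in> C'" for y
    proof -
      have "comp A W y \<subseteq> comp A' W y" by (rule comp_mono) (rule mono)
      also have "comp A' W y = C'" using comps_eq_of_mem[OF sA' C'c that] by simp
      finally show ?thesis .
    qed
    have U: "\<Union>?F = C'"
    proof
      show "\<Union>?F \<subseteq> C'" using sub1 by blast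
      show "C' \<subseteq> \<Union>?F"
      proof
        fix y assume "y \<in> C'"
        then have "comp A W y \<in> ?F" by (rule imageI)
        then show "y \<in> \<Union>?F" using comp_self[of y A W] by (rule UnionI)
      qed
    qed
    have Fsub: "?F \<subseteq> comps A W"
    proof
      fix C assume "C \<in> ?F"
      then obtain y where "y \<in> C'" "C = comp A W y" by (rule imageE) simp
      then show "C \<in> comps A W" using subW unfolding comps_def by auto
    qed
    have finC': "finite C'" using subW fin by (rule finite_subset)
    have evF: "even (card C)" if CF: "C \<in> ?F" for C
    proof -
      have "C \<in> comps A W" using CF Fsub by (rule subsetD[rotated])
      moreover have "C \<subseteq> C'" using CF sub1 by blast
      ultimately show "even (card C)" using no by (auto simp: ocomps_def)
    qed
    have pw: "pairwise disjnt ?F"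
      unfolding pairwise_def disjnt_def
    proof (intro ballI impI)
      fix C1 C2 assume "C1 \<in> ?F" "C2 \<in> ?F" "C1 \<noteq> C2"
      then show "C1 \<inter> C2 = {}" using comps_disj[OF sA] Fsub by (meson subsetD)
    qed
    have fF: "finite C" if "C \<in> ?F" for C
    proof -
      have "C \<subseteq> C'" using that sub1 by blast
      then show ?thesis using finC' by (rule finite_subset)
    qed
    have "card (\<Union>?F) = sum card ?F" using pw fF by (rule card_Union_disjoint)
    then have "card C' = sum card ?F" using U by simp
    moreover have "even (sum card ?F)"
      using evF by (intro dvd_sum) auto
    ultimately show False using oddC' by simp
  qed
  define g where "g C' = (SOME C. C \<in> ocomps A W \<and> C \<subseteq> C')" for C'
  have g: "g C' \<in> ocomps A W \<and> g C' \<subseteq> C'" if "C' \<in> ocomps A' W" for C'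
  proof -
    have "\<exists>C. C \<in> ocomps A W \<and> C \<subseteq> C'" using ex[OF that] by blast
    then show ?thesis unfolding g_def by (rule someI_ex)
  qed
  have inj: "inj_on g (ocomps A' W)"
  proof (rule inj_onI)
    fix C1 C2 assume C1: "C1 \<in> ocomps A' W" and C2: "C2 \<in> ocomps A' W" and eq: "g C1 = g C2"
    have "g C1 \<in> comps A W" using g[OF C1] by (simp add: ocomps_def)
    then have "g C1 \<noteq> {}" by (rule comps_nonempty)
    then obtain z where "z \<in> g C1" by blast
    then have "z \<in> C1" "z \<in> C2" using g[OF C1] g[OF C2] eq by auto
    then have "C1 \<inter> C2 \<noteq> {}" by blast
    moreover have "C1 \<in> comps A' W" "C2 \<in> comps A' W" using C1 C2 by (auto simp: ocomps_def)
    ultimately show "C1 = C2" using comps_disj[OF sA'] by blast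
  qed
  have "g ` ocomps A' W \<subseteq> ocomps A W" using g by blast
  then show ?thesis
    using card_inj_on_le[OF inj] finite_ocomps[OF fin] by blast
qed

lemma tutte_mono:
  assumes "symr A" "symr A'" "\<And>u v. A u v \<Longrightarrow> A' u v" "finite V" "tutte A V"
  shows "tutte A' V"
  unfolding tutte_def
proof (intro allI impI)
  fix S assume "S \<subseteq> V"
  have "card (ocomps A' (V - S)) \<le> card (ocomps A (V - S))"
    using ocomps_mono assms by (meson finite_Diff)
  also have "\<dots> \<le> card S" using assms(5) \<open>S \<subseteq> V\<close> by (simp add: tutte_def)
  finally show "card (ocomps A' (V - S)) \<le> card S" .
qed

lemma even_clique_pm:
  assumes "finite B" "even (card B)" "\<forall>x\<in>B. \<forall>y\<in>B. x \<noteq> y \<longrightarrow> A x y"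
  shows "\<exists>p. inv_pm A B p"
  using assms
proof (induction "card B" arbitrary: B rule: less_induct)
  case less
  show ?case
  proof (cases "B = {}")
    case True
    then show ?thesis by (auto simp: inv_pm_def)
  next
    case False
    then obtain x where x: "x \<in> B" by blast
    have "card B \<noteq> 0" using False less.prems(1) by simp
    then have "card B \<ge> 2" using less.prems(2) by presburger
    then have "card (B - {x}) \<ge> 1" using x less.prems(1) by simp
    then have "B - {x} \<noteq> {}" by (intro notI) simp
    then obtain y where y: "y \<in> B" "y \<noteq> x" by blast
    define B' where "B' = B - {x, y}"
    have cB': "card B' = card B - 2" unfolding B'_def using x y less.prems(1) by (simp add: card_Diff_subset)
    have "card B' < card B" using cB' \<open>card B \<ge> 2\<close> by simp
    moreover have "finite B'" using less.prems(1) by (simp add: B'_def)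
    moreover have "even (card B')" using cB' less.prems(2) \<open>card B \<ge> 2\<close> by simp
    moreover have "\<forall>u\<in>B'. \<forall>v\<in>B'. u \<noteq> v \<longrightarrow> A u v" using less.prems(3) by (auto simp: B'_def)
    ultimately obtain p' where p': "inv_pm A B' p'" using less.hyps by blast
    define p where "p = p'(x := y, y := x)"
    have Axy: "A x y" "A y x" using less.prems(3) x y by auto
    have "inv_pm A B p"
      unfolding inv_pm_def
    proof
      fix v assume v: "v \<in> B"
      show "p v \<in> B \<and> p v \<noteq> v \<and> p (p v) = v \<and> A v (p v)"
      proof (cases "v = x \<or> v = y")
        case True
        then show ?thesis using x y Axy by (auto simp: p_def)
      next
        case False
        then have vB': "v \<in> B'" using v by (simp add: B'_def)
        then have pv: "p' v \<in> B'" "p' v \<noteq> v" "p' (p' v) = v" "A v (p' v)" using p' by (auto simp: inv_pm_def)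
        then have "p' v \<noteq> x" "p' v \<noteq> y" by (auto simp: B'_def)
        then show ?thesis using pv False by (auto simp: p_def B'_def)
      qed
    qed
    then show ?thesis by blast
  qed
qed

lemma glue_pm:
  assumes "finite F" "\<forall>B1\<in>F. \<forall>B2\<in>F. B1 \<noteq> B2 \<longrightarrow> B1 \<inter> B2 = {}" "\<forall>B\<in>F. \<exists>p. inv_pm A B p"
  shows "\<exists>p. inv_pm A (\<Union>F) p"
  using assms
proof (induction F rule: finite_induct)
  case empty
  then show ?case by (auto simp: inv_pm_def)
next
  case (insert B F)
  obtain pB where pB: "inv_pm A B pB" using insert.prems by blast
  have h1: "\<forall>B1\<in>F. \<forall>B2\<in>F. B1 \<noteq> B2 \<longrightarrow> B1 \<inter> B2 = {}" using insert.prems(1) by simp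
  have h2: "\<forall>B\<in>F. \<exists>p. inv_pm A B p" using insert.prems(2) by simp
  obtain pF where pF: "inv_pm A (\<Union>F) pF" using insert.IH[OF h1 h2] by (elim exE)
  have disj: "B \<inter> \<Union>F = {}"
  proof (rule ccontr)
    assume "B \<inter> \<Union>F \<noteq> {}"
    then obtain z B2 where "z \<in> B" "B2 \<in> F" "z \<in> B2" by blast
    moreover have "B \<noteq> B2" using insert.hyps(2) \<open>B2 \<in> F\<close> by blast
    ultimately show False using insert.prems(1) by blast
  qed
  define p where "p v = (if v \<in> B then pB v else pF v)" for v
  have "inv_pm A (\<Union>(insert B F)) p"
    unfolding inv_pm_def
  proof
    fix v assume "v \<in> \<Union>(insert B F)"
    then have "v \<in> B \<or> v \<in> \<Union>F" by blast
    then show "p v \<in> \<Union>(insert B F) \<and> p v \<noteq> v \<and> p (p v) = v \<and> A v (p v)"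
    proof
      assume "v \<in> B"
      then have "pB v \<in> B" "pB v \<noteq> v" "pB (pB v) = v" "A v (pB v)" using pB by (auto simp: inv_pm_def)
      then show ?thesis using \<open>v \<in> B\<close> by (auto simp: p_def)
    next
      assume vF: "v \<in> \<Union>F"
      then have "v \<notin> B" using disj by blast
      have "pF v \<in> \<Union>F" "pF v \<noteq> v" "pF (pF v) = v" "A v (pF v)" using pF vF by (auto simp: inv_pm_def)
      moreover have "pF v \<notin> B" using \<open>pF v \<in> \<Union>F\<close> disj by blast
      ultimately show ?thesis using \<open>v \<notin> B\<close> by (auto simp: p_def)
    qed
  qed
  then show ?case by blast
qed


fun walk :: "('a \<Rightarrow> 'a) \<Rightarrow> ('a \<Rightarrow> 'a) \<Rightarrow> 'a \<Rightarrow> nat \<Rightarrow> 'a" where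
  "walk p q d 0 = d"
| "walk p q d (Suc n) = (if even n then p (walk p q d n) else q (walk p q d n))"

declare walk.simps(2)[simp del]

locale swapctx =
  fixes V :: "'a set" and A :: "'a \<Rightarrow> 'a \<Rightarrow> bool" and a b c d :: 'a and p1 p2 :: "'a \<Rightarrow> 'a"
  assumes fin: "finite V" and symA: "symr A"
    and inV: "a \<in> V" "b \<in> V" "c \<in> V" "d \<in> V"
    and Aab: "A a b" and Abc: "A b c" and nAbd: "\<not> A b d"
    and dist: "a \<noteq> b" "b \<noteq> c" "a \<noteq> c" "d \<noteq> b"
    and p1: "inv_pm (\<lambda>u v. A u v \<or> (u = a \<and> v = c) \<or> (u = c \<and> v = a)) V p1" and p1a: "p1 a = c"
    and p2: "inv_pm (\<lambda>u v. A u v \<or> (u = b \<and> v = d) \<or> (u = d \<and> v = b)) V p2" and p2b: "p2 b = d"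
begin

abbreviation u where "u \<equiv> walk p1 p2 d"
definition R where "R n = (if even n then p1 else p2)"
definition stop where "stop n \<longleftrightarrow> (odd n \<and> u n = b) \<or> (even n \<and> u n \<in> {a, c})"

lemma p1V: "v \<in> V \<Longrightarrow> p1 v \<in> V \<and> p1 v \<noteq> v \<and> p1 (p1 v) = v"
  using p1 by (simp add: inv_pm_def)
lemma p2V: "v \<in> V \<Longrightarrow> p2 v \<in> V \<and> p2 v \<noteq> v \<and> p2 (p2 v) = v"
  using p2 by (simp add: inv_pm_def)
lemma p1c: "p1 c = a" using p1V[OF inV(1)] p1a by simp
lemma p2d: "p2 d = b" using p2V[OF inV(2)] p2b by simp

lemma dA: "d \<noteq> a" "d \<noteq> c"
  using nAbd Aab Abc symA by (auto simp: symr_def)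

lemma RV: "v \<in> V \<Longrightarrow> R n v \<in> V \<and> R n v \<noteq> v \<and> R n (R n v) = v"
  using p1V p2V by (simp add: R_def)

lemma uV: "u n \<in> V"
  by (induction n) (use inV p1V p2V in \<open>auto simp: walk.simps\<close>)

lemma fwd: "u (Suc n) = R n (u n)" by (simp add: R_def walk.simps)
lemma bwd: "R n (u (Suc n)) = u n" using RV[OF uV[of n], of n] by (simp only: fwd)

lemma p1_even: "even n \<Longrightarrow> p1 (u n) = u (Suc n)" by (simp add: fwd R_def)
lemma p1_odd: "odd n \<Longrightarrow> p1 (u n) = u (n - 1)"
proof -
  assume "odd n"
  then obtain m where m: "n = Suc m" by (cases n) auto
  then have hm: "even m" using \<open>odd n\<close> by simp
  show ?thesis using bwd[of m] m hm by (simp add: R_def)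
qed
lemma p2_odd: "odd n \<Longrightarrow> p2 (u n) = u (Suc n)" by (simp add: fwd R_def)
lemma p2_even: "even n \<Longrightarrow> n > 0 \<Longrightarrow> p2 (u n) = u (n - 1)"
proof -
  assume "even n" "n > 0"
  then obtain m where m: "n = Suc m" by (cases n) auto
  then have hm: "odd m" using \<open>even n\<close> by simp
  show ?thesis using bwd[of m] m hm by (simp add: R_def)
qed

lemma Rpar: "even k = even l \<Longrightarrow> R k = R l" by (simp add: R_def)

lemma rep: "i < j \<Longrightarrow> u i = u j \<Longrightarrow> \<exists>k<j. stop k"
proof (induction j arbitrary: i rule: less_induct)
  case (less j)
  obtain m where m: "j = Suc m" using less.prems(1) by (cases j) auto
  show ?case
  proof (cases "i = 0")
    case True
    then have uj: "u j = d" using less.prems by simp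
    show ?thesis
    proof (cases "even m")
      case True
      then have "p1 (u m) = d" using uj m p1_even by simp
      then have um: "u m = p1 d" using p1V[OF uV[of m]] by (metis)
      show ?thesis
      proof (cases "m = 0")
        case True
        then show ?thesis using um p1V[OF inV(4)] by simp
      next
        case False
        moreover have "m \<noteq> 1" using \<open>even m\<close> by auto
        ultimately have "1 < m" by linarith
        moreover have "u 1 = u m" using um fwd[of 0] by (simp add: R_def)
        moreover have "m < j" using m by simp
        ultimately have "\<exists>k<m. stop k" using less.IH[of m 1] by simp
        then obtain k where "k < m" "stop k" by blast
        then show ?thesis unfolding m by (blast intro: less_SucI lessI)
      qed
    next
      case False
      then have "p2 (u m) = d" using uj m p2_odd by simp
      then have "u m = p2 d" using p2V[OF uV[of m]] by (metis)
      then have "u m = b" using p2d by simp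
      then have "stop m" using False by (simp add: stop_def)
      then show ?thesis unfolding m by (blast intro: less_SucI lessI)
    qed
  next
    case False
    obtain l where l: "i = Suc l" using False by (cases i) auto
    show ?thesis
    proof (cases "even l = even m")
      case True
      have "u l = R l (u i)" using bwd[of l] l by simp
      also have "\<dots> = R m (u j)" using Rpar[OF True] less.prems(2) by simp
      also have "\<dots> = u m" using bwd[of m] m by simp
      finally have "u l = u m" .
      moreover have "l < m" using less.prems(1) l m by simp
      moreover have "m < j" using m by simp
      ultimately have "\<exists>k<m. stop k" using less.IH[of m l] by simp
      then obtain k where "k < m" "stop k" by blast
      then show ?thesis unfolding m by (blast intro: less_SucI lessI)
    next
      case False
      then have par: "even i = even m" using l by simp
      have "u (Suc i) = R i (u i)" by (rule fwd)
      also have "\<dots> = R m (u j)" using Rpar[OF par] less.prems(2) by simp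
      also have "\<dots> = u m" using bwd[of m] m by simp
      finally have eq: "u (Suc i) = u m" .
      show ?thesis
      proof (cases "Suc i < m")
        case True
        moreover have "m < j" using m by simp
        ultimately have "\<exists>k<m. stop k" using less.IH[of m "Suc i"] eq by simp
        then obtain k where "k < m" "stop k" by blast
        then show ?thesis unfolding m by (blast intro: less_SucI lessI)
      next
        case False
        then have "m = i \<or> m = Suc i" using less.prems(1) m by auto
        then show ?thesis
        proof
          assume "m = i"
          then have "u (Suc i) = u i" using eq by simp
          moreover have "u (Suc i) \<noteq> u i" using RV[OF uV[of i], of i] fwd[of i] by simp
          ultimately show ?thesis by simp
        next
          assume "m = Suc i"
          then show ?thesis using par by simp
        qed
      qed
    qed
  qed
qed

lemma stop_ex: "\<exists>k. stop k"
proof -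
  have "range u \<subseteq> V" using uV by blast
  then have "finite (range u)" using fin finite_subset by blast
  then have "\<not> inj_on u UNIV" using finite_imageD infinite_UNIV_nat by blast
  then obtain i j where "i \<noteq> j" "u i = u j" unfolding inj_on_def by blast
  then have "\<exists>i j. i < j \<and> u i = u j" by (metis linorder_neqE_nat)
  then show ?thesis using rep by blast
qed

definition T where "T = (LEAST k. stop k)"

lemma stopT: "stop T" unfolding T_def using stop_ex by (metis LeastI)
lemma T_min: "k < T \<Longrightarrow> \<not> stop k" unfolding T_def by (rule not_less_Least)

lemma distinct_u: assumes "i < j" "j \<le> T" shows "u i \<noteq> u j"
proof
  assume "u i = u j"
  then obtain k where "k < j" "stop k" using rep[OF assms(1)] by blast
  moreover have "k < T" using \<open>k < j\<close> assms(2) by simp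
  ultimately show False using T_min by blast
qed

lemma T_pos: "T > 0"
proof -
  have "\<not> stop 0" using dA by (simp add: stop_def)
  then show ?thesis using stopT by (cases T) auto
qed

lemma not_ac: "n < T \<Longrightarrow> u n \<notin> {a, c}"
proof
  assume n: "n < T" and ac: "u n \<in> {a, c}"
  show False
  proof (cases "even n")
    case True
    then show False using T_min[OF n] ac by (simp add: stop_def)
  next
    case False
    then have "p1 (u n) = u (n - 1)" by (rule p1_odd)
    moreover have "p1 (u n) \<in> {a, c}" using ac p1a p1c by auto
    ultimately have "u (n - 1) \<in> {a, c}" by simp
    moreover have "even (n - 1)" using False by simp
    moreover have "n - 1 < T" using n by simp
    ultimately show False using T_min[of "n - 1"] by (simp add: stop_def)
  qed
qed

definition Y where "Y = u ` {0..T}"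

lemma Y_iff: "v \<in> Y \<longleftrightarrow> (\<exists>n\<le>T. v = u n)"
  by (auto simp: Y_def)

lemma uY: "n \<le> T \<Longrightarrow> u n \<in> Y" by (simp add: Y_def)

lemma dY: "d \<in> Y" using Y_iff by force

lemma pmA1: "v \<in> V \<Longrightarrow> v \<notin> {a, c} \<Longrightarrow> A v (p1 v)"
  using p1 by (auto simp: inv_pm_def)
lemma pmA2: "v \<in> V \<Longrightarrow> v \<notin> {b, d} \<Longrightarrow> A v (p2 v)"
  using p2 by (auto simp: inv_pm_def)

lemma case_odd:
  assumes oT: "odd T"
  shows "\<exists>p. inv_pm A V p"
proof -
  have uT: "u T = b" using stopT oT by (simp add: stop_def)
  have bY: "b \<in> Y" unfolding Y_iff using uT[symmetric] by (intro exI[of _ T]) simp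
  have Yac: "v \<in> Y \<Longrightarrow> v \<notin> {a, c}" for v
  proof -
    assume "v \<in> Y"
    then obtain n where n: "n \<le> T" "v = u n" unfolding Y_iff by (elim exE conjE)
    show "v \<notin> {a, c}"
    proof (cases "n = T")
      case True then show ?thesis using n uT dist by auto
    next
      case False then show ?thesis using n not_ac by simp
    qed
  qed
  have Y1: "p1 v \<in> Y" if "v \<in> Y" for v
  proof -
    obtain n where n: "n \<le> T" "v = u n" using \<open>v \<in> Y\<close> unfolding Y_iff by (elim exE conjE)
    show ?thesis
    proof (cases "even n")
      case True
      then have "n \<noteq> T" using oT by auto
      then have "Suc n \<le> T" using n by simp
      then show ?thesis using p1_even[OF True] n Y_iff by metis
    next
      case False
      then show ?thesis using p1_odd[OF False] n Y_iff by (metis diff_le_self le_trans)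
    qed
  qed
  have Y2: "p2 v \<notin> Y" if "v \<in> V" "v \<notin> Y" for v
  proof
    assume "p2 v \<in> Y"
    then obtain n where n: "n \<le> T" "p2 v = u n" unfolding Y_iff by (elim exE conjE)
    then have v: "v = p2 (u n)" using p2V[OF \<open>v \<in> V\<close>] by metis
    have "p2 (u n) \<in> Y"
    proof (cases "odd n")
      case True
      show ?thesis
      proof (cases "n = T")
        case True then show ?thesis using uT p2b dY by simp
      next
        case False then have "Suc n \<le> T" using n by simp
        then show ?thesis using p2_odd[OF \<open>odd n\<close>] Y_iff by metis
      qed
    next
      case False
      show ?thesis
      proof (cases "n = 0")
        case True then show ?thesis using p2d bY by simp
      next
        case nz: False
        then show ?thesis using p2_even[of n] False n Y_iff by (metis diff_le_self le_trans not_gr0 odd_pos)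
      qed
    qed
    then show False using v \<open>v \<notin> Y\<close> by simp
  qed
  have YV: "Y \<subseteq> V" unfolding Y_def using uV by blast
  define q where "q v = (if v \<in> Y then p1 v else p2 v)" for v
  have "inv_pm A V q"
    unfolding inv_pm_def
  proof
    fix v assume vV: "v \<in> V"
    show "q v \<in> V \<and> q v \<noteq> v \<and> q (q v) = v \<and> A v (q v)"
    proof (cases "v \<in> Y")
      case True
      then have "q v = p1 v" "p1 v \<in> Y" using Y1 by (auto simp: q_def)
      moreover have "A v (p1 v)" using pmA1 vV Yac True by blast
      ultimately show ?thesis using p1V[OF vV] by (simp add: q_def)
    next
      case False
      then have "q v = p2 v" "p2 v \<notin> Y" using Y2 vV by (auto simp: q_def)
      moreover have "v \<notin> {b, d}" using False bY dY by auto
      then have "A v (p2 v)" using pmA2 vV by blast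
      ultimately show ?thesis using p2V[OF vV] by (simp add: q_def)
    qed
  qed
  then show ?thesis by blast
qed

lemma case_even:
  assumes eT: "even T"
  shows "\<exists>p. inv_pm A V p"
proof -
  define w where "w = u T"
  have wac: "w \<in> {a, c}" using stopT eT by (simp add: stop_def w_def)
  have wY: "w \<in> Y" unfolding Y_iff w_def by (intro exI[of _ T]) simp
  have bY: "b \<notin> Y"
  proof
    assume "b \<in> Y"
    then obtain n where n: "n \<le> T" "u n = b" unfolding Y_iff by metis
    show False
    proof (cases "odd n")
      case True
      then have "n \<noteq> T" using eT by auto
      then have "n < T" using n(1) by simp
      then show False using T_min[of n] True n by (simp add: stop_def)
    next
      case False
      have "n \<noteq> 0"
      proof
        assume "n = 0"
        then have "u n = d" by simp
        then show False using n(2) dist(4) by simp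
      qed
      then have "p2 (u n) = u (n - 1)" using p2_even False by simp
      then have "u (n - 1) = d" using n p2b by simp
      then have "u 0 = u (n - 1)" by simp
      moreover have "0 < n - 1"
      proof -
        have "n \<noteq> 1" using False by auto
        then show ?thesis using \<open>n \<noteq> 0\<close> by simp
      qed
      moreover have "n - 1 \<le> T" using n(1) by simp
      ultimately show False using distinct_u[of 0 "n - 1"] by simp
    qed
  qed
  have w'Y: "p1 w \<notin> Y"
  proof
    assume "p1 w \<in> Y"
    then obtain n where n: "n \<le> T" "p1 w = u n" unfolding Y_iff by (elim exE conjE)
    show False
    proof (cases "even n")
      case True
      show False
      proof (cases "n = T")
        case True then show False using n p1V[OF uV[of T]] w_def by simp
      next
        case False then have "n < T" using n by simp
        moreover have "u n \<in> {a, c}" using n wac p1a p1c by auto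
        ultimately show False using not_ac by blast
      qed
    next
      case False
      have "p1 (u n) = u (n - 1)" using p1_odd False by simp
      then have "u (n - 1) = w" using n p1V[OF uV[of T]] w_def by metis
      moreover have "n - 1 < T" using n False by (cases n) auto
      ultimately show False using distinct_u[of "n - 1" T] w_def by simp
    qed
  qed
  have Yac: "v \<in> Y \<Longrightarrow> v \<noteq> w \<Longrightarrow> v \<notin> {a, c}" for v
  proof -
    assume "v \<in> Y" "v \<noteq> w"
    then obtain n where n: "n \<le> T" "v = u n" unfolding Y_iff by (elim exE conjE)
    then have "n < T" using \<open>v \<noteq> w\<close> w_def by (cases "n = T") auto
    then show "v \<notin> {a, c}" using n not_ac by simp
  qed
  have Y1: "p1 v \<in> Y \<and> p1 v \<noteq> w" if "v \<in> Y" "v \<noteq> w" for v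
  proof -
    obtain n where n: "n \<le> T" "v = u n" using \<open>v \<in> Y\<close> unfolding Y_iff by (elim exE conjE)
    then have nT: "n < T" using \<open>v \<noteq> w\<close> w_def by (cases "n = T") auto
    show ?thesis
    proof (cases "even n")
      case True
      have "Suc n \<noteq> T"
      proof
        assume "Suc n = T"
        then have "T = Suc n" by simp
        then have "odd T" using True by simp
        then show False using eT by simp
      qed
      then have lt: "Suc n < T" using nT by simp
      have "p1 v = u (Suc n)" using p1_even[OF True] n(2) by simp
      moreover have "u (Suc n) \<in> Y" using lt by (intro uY) simp
      moreover have "u (Suc n) \<noteq> w" using distinct_u[OF lt] w_def by simp
      ultimately show ?thesis by simp
    next
      case False
      have lt: "n - 1 < T" using nT by simp
      have "p1 v = u (n - 1)" using p1_odd[OF False] n(2) by simp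
      moreover have "u (n - 1) \<in> Y" using lt by (intro uY) simp
      moreover have "u (n - 1) \<noteq> w" using distinct_u[OF lt] w_def by simp
      ultimately show ?thesis by simp
    qed
  qed
  have Y2: "p2 v \<notin> Y \<and> p2 v \<noteq> b" if "v \<in> V" "v \<notin> Y" "v \<noteq> b" for v
  proof
    show "p2 v \<noteq> b"
    proof
      assume "p2 v = b"
      then have "v = d" using p2V[OF \<open>v \<in> V\<close>] p2b by metis
      then show False using dY \<open>v \<notin> Y\<close> by simp
    qed
    show "p2 v \<notin> Y"
    proof
      assume "p2 v \<in> Y"
      then obtain n where n: "n \<le> T" "p2 v = u n" unfolding Y_iff by (elim exE conjE)
      then have v: "v = p2 (u n)" using p2V[OF \<open>v \<in> V\<close>] by metis
      have "p2 (u n) \<in> Y \<or> p2 (u n) = b"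
      proof (cases "odd n")
        case True
        then have "n \<noteq> T" using eT by auto
        then have "Suc n \<le> T" using n by simp
        then show ?thesis using p2_odd[OF True] Y_iff by metis
      next
        case False
        show ?thesis
        proof (cases "n = 0")
          case True then show ?thesis using p2d by simp
        next
          case nz: False
          then show ?thesis using p2_even[of n] False n Y_iff by (metis diff_le_self le_trans not_gr0)
        qed
      qed
      then show False using v \<open>v \<notin> Y\<close> \<open>v \<noteq> b\<close> by auto
    qed
  qed
  have Awb: "A w b" "A b w" using wac Aab Abc symA by (auto simp: symr_def)
  have YV: "Y \<subseteq> V" unfolding Y_def using uV by blast
  have wV: "w \<in> V" using wY YV by blast
  have wb: "w \<noteq> b" using wY bY by auto
  define q where "q v = (if v = w then b else if v = b then w else if v \<in> Y then p1 v else p2 v)" for v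
  have "inv_pm A V q"
    unfolding inv_pm_def
  proof
    fix v assume vV: "v \<in> V"
    show "q v \<in> V \<and> q v \<noteq> v \<and> q (q v) = v \<and> A v (q v)"
    proof (cases "v = w")
      case True
      then show ?thesis using wb inV Awb by (simp add: q_def)
    next
      case vw: False
      show ?thesis
      proof (cases "v = b")
        case True
        then show ?thesis using wb wV Awb by (simp add: q_def)
      next
        case vb: False
        show ?thesis
        proof (cases "v \<in> Y")
          case True
          have qv: "q v = p1 v" using True vw vb by (simp add: q_def)
          have h: "p1 v \<in> Y" "p1 v \<noteq> w" using Y1 True vw by auto
          have h2: "p1 v \<noteq> b" using h bY by auto
          have "A v (p1 v)" using pmA1 vV Yac True vw by blast
          then show ?thesis using qv h h2 p1V[OF vV] by (simp add: q_def)
        next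
          case False
          have qv: "q v = p2 v" using False vw vb by (simp add: q_def)
          have h: "p2 v \<notin> Y" "p2 v \<noteq> b" using Y2 vV False vb by auto
          have h2: "p2 v \<noteq> w" using h wY by auto
          have "v \<notin> {b, d}" using vb False dY by auto
          then have "A v (p2 v)" using pmA2 vV by blast
          then show ?thesis using qv h h2 p2V[OF vV] by (simp add: q_def)
        qed
      qed
    qed
  qed
  then show ?thesis by blast
qed

theorem swap_exists: "\<exists>p. inv_pm A V p"
  using case_odd case_even by blast

end


lemma glue_fun:
  assumes "finite I" "\<And>i j. i \<in> I \<Longrightarrow> j \<in> I \<Longrightarrow> i \<noteq> j \<Longrightarrow> B i \<inter> B j = {}"
    "\<And>i. i \<in> I \<Longrightarrow> \<exists>p. inv_pm A (B i) p"
  shows "\<exists>p. inv_pm A (\<Union>(B ` I)) p"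
proof (rule glue_pm)
  show "finite (B ` I)" using assms(1) by simp
  show "\<forall>B1\<in>B ` I. \<forall>B2\<in>B ` I. B1 \<noteq> B2 \<longrightarrow> B1 \<inter> B2 = {}"
  proof (intro ballI impI)
    fix B1 B2 assume "B1 \<in> B ` I" "B2 \<in> B ` I" "B1 \<noteq> B2"
    then obtain i j where "i \<in> I" "j \<in> I" "B1 = B i" "B2 = B j" by blast
    then show "B1 \<inter> B2 = {}" using assms(2) \<open>B1 \<noteq> B2\<close> by blast
  qed
  show "\<forall>B\<in>B ` I. \<exists>p. inv_pm A B p" using assms(3) by blast
qed

lemma inv_pm_drop:
  assumes "inv_pm (\<lambda>u v. A u v \<or> (u = a \<and> v = c) \<or> (u = c \<and> v = a)) V p" "p a \<noteq> c" "a \<in> V" "c \<in> V"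
  shows "inv_pm A V p"
  unfolding inv_pm_def
proof
  fix v assume v: "v \<in> V"
  have h: "p v \<in> V" "p v \<noteq> v" "p (p v) = v" "A v (p v) \<or> (v = a \<and> p v = c) \<or> (v = c \<and> p v = a)"
    using assms(1) v by (auto simp: inv_pm_def)
  have "p (p c) = c" using assms(1,4) by (simp add: inv_pm_def)
  then have "A v (p v)" using h(4) assms(2) by auto
  then show "p v \<in> V \<and> p v \<noteq> v \<and> p (p v) = v \<and> A v (p v)" using h by simp
qed

lemma p3_lemma:
  assumes "(rel_in A W)\<^sup>*\<^sup>* x z" "x \<in> W"
  shows "z = x \<or> (A x z \<and> x \<noteq> z) \<or>
    (\<exists>a b c. a \<in> W \<and> b \<in> W \<and> c \<in> W \<and> A a b \<and> A b c \<and> \<not> A a c \<and> a \<noteq> b \<and> b \<noteq> c \<and> a \<noteq> c)"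
  using assms(1)
proof (induction rule: rtranclp_induct)
  case base
  then show ?case by simp
next
  case (step y z)
  have yz: "y \<in> W" "z \<in> W" "A y z" using step.hyps(2) by (auto simp: rel_in_def)
  from step.IH show ?case
  proof (elim disjE)
    assume "y = x"
    then show ?thesis using yz by auto
  next
    assume xy: "A x y \<and> x \<noteq> y"
    show ?thesis
    proof (cases "z = x")
      case True then show ?thesis by simp
    next
      case zx: False
      show ?thesis
      proof (cases "A x z")
        case True then show ?thesis using zx by auto
      next
        case False
        have "y \<noteq> z" using False xy by auto
        then have "x \<in> W \<and> y \<in> W \<and> z \<in> W \<and> A x y \<and> A y z \<and> \<not> A x z \<and> x \<noteq> y \<and> y \<noteq> z \<and> x \<noteq> z"
          using assms(2) yz xy False zx by auto
        then show ?thesis by blast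
      qed
    qed
  next
    assume "\<exists>a b c. a \<in> W \<and> b \<in> W \<and> c \<in> W \<and> A a b \<and> A b c \<and> \<not> A a c \<and> a \<noteq> b \<and> b \<noteq> c \<and> a \<noteq> c"
    then show ?thesis by blast
  qed
qed

lemma clique_case:
  assumes fin: "finite V" and sA: "symr A" and tut: "tutte A V"
    and U_def: "U = {v\<in>V. \<forall>w\<in>V. w \<noteq> v \<longrightarrow> A v w}"
    and cl: "\<forall>C\<in>comps A (V - U). \<forall>x\<in>C. \<forall>y\<in>C. x \<noteq> y \<longrightarrow> A x y"
  shows "\<exists>p. inv_pm A V p"
proof -
  define W where "W = V - U"
  have UV: "U \<subseteq> V" using U_def by blast
  have finW: "finite W" using fin by (simp add: W_def)
  have finU: "finite U" using fin UV finite_subset by blast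
  define OC where "OC = ocomps A W"
  have finOC: "finite OC" unfolding OC_def using finW by (rule finite_ocomps)
  have kU: "card OC \<le> card U" using tut UV unfolding tutte_def OC_def W_def by blast
  have "card (ocomps A (V - {})) \<le> card ({} :: 'a set)" using tut unfolding tutte_def by blast
  then have "card (ocomps A V) = 0" by simp
  then have evV: "even (card V)" using even_card_ocomps[OF sA fin] by simp
  have evW: "even (card W) \<longleftrightarrow> even (card OC)" unfolding OC_def using even_card_ocomps[OF sA finW] .
  have cardV: "card V = card U + card W"
  proof -
    have "V = U \<union> W" using UV by (auto simp: W_def)
    moreover have "U \<inter> W = {}" by (auto simp: W_def)
    ultimately show ?thesis using card_Un_disjoint finU finW by metis
  qed
  obtain r where r: "inj_on r OC" "r ` OC \<subseteq> U" using card_le_inj[OF finOC finU kU] by blast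
  define s where "s C = (SOME x. x \<in> C)" for C :: "'a set"
  have OCc: "C \<in> comps A W" if "C \<in> OC" for C using that by (simp add: OC_def ocomps_def)
  have sC: "s C \<in> C" if "C \<in> comps A W" for C
  proof -
    have "C \<noteq> {}" using that by (rule comps_nonempty)
    then show ?thesis unfolding s_def by (meson ex_in_conv someI_ex)
  qed
  have CW: "C \<subseteq> W" if "C \<in> comps A W" for C using that by (rule comps_sub)
  have Cfin: "finite C" if "C \<in> comps A W" for C using CW[OF that] finW finite_subset by blast
  have cdisj: "C1 \<inter> C2 = {}" if "C1 \<in> comps A W" "C2 \<in> comps A W" "C1 \<noteq> C2" for C1 C2
    using comps_disj[OF sA that] .
  have clW: "\<forall>x\<in>C. \<forall>y\<in>C. x \<noteq> y \<longrightarrow> A x y" if "C \<in> comps A W" for C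
    using cl that unfolding W_def by blast
  have univ: "A u v" if "u \<in> U" "v \<in> V" "u \<noteq> v" for u v
  proof -
    have "\<forall>w\<in>V. w \<noteq> u \<longrightarrow> A u w" using that(1) unfolding U_def by simp
    then show ?thesis using that(2,3) by auto
  qed
  have univ2: "A v u" if "u \<in> U" "v \<in> V" "u \<noteq> v" for u v
    using univ[OF that] sA by (simp add: symr_def)
  define B1 where "B1 C = (if even (card C) then C else C - {s C})" for C
  define X1 where "X1 = \<Union>(B1 ` comps A W)"
  define X2 where "X2 = \<Union>((\<lambda>C. {s C, r C}) ` OC)"
  define X3 where "X3 = U - r ` OC"
  have pm1: "\<exists>p. inv_pm A X1 p" unfolding X1_def
  proof (rule glue_fun)
    show "finite (comps A W)" using finW by (rule finite_comps)
    show "B1 i \<inter> B1 j = {}" if "i \<in> comps A W" "j \<in> comps A W" "i \<noteq> j" for i j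
      using cdisj[OF that] by (auto simp: B1_def)
    show "\<exists>p. inv_pm A (B1 i) p" if i: "i \<in> comps A W" for i
    proof (rule even_clique_pm)
      show "finite (B1 i)" using Cfin[OF i] by (simp add: B1_def)
      show "even (card (B1 i))"
      proof (cases "even (card i)")
        case True then show ?thesis by (simp add: B1_def)
      next
        case False
        have "card (i - {s i}) = card i - 1" using sC[OF i] Cfin[OF i] by simp
        moreover have "card i \<noteq> 0" using False by (intro notI) simp
        ultimately show ?thesis using False by (simp add: B1_def)
      qed
      show "\<forall>x\<in>B1 i. \<forall>y\<in>B1 i. x \<noteq> y \<longrightarrow> A x y" using clW[OF i] by (auto simp: B1_def)
    qed
  qed
  have pm2: "\<exists>p. inv_pm A X2 p" unfolding X2_def
  proof (rule glue_fun)
    show "finite OC" by (rule finOC)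
    show "{s i, r i} \<inter> {s j, r j} = {}" if "i \<in> OC" "j \<in> OC" "i \<noteq> j" for i j
    proof -
      have si: "s i \<in> i" "s j \<in> j" using sC OCc that by blast+
      have "s i \<noteq> s j"
      proof
        assume "s i = s j"
        then have "s i \<in> i \<inter> j" using si by simp
        then show False using cdisj[OF OCc[OF that(1)] OCc[OF that(2)] that(3)] by simp
      qed
      moreover have "r i \<noteq> r j" using r(1) that unfolding inj_on_def by metis
      moreover have "s i \<in> W" "s j \<in> W" using sC OCc CW that by blast+
      moreover have "r i \<in> U" "r j \<in> U" using r(2) that by blast+
      ultimately show ?thesis by (auto simp: W_def)
    qed
    show "\<exists>p. inv_pm A {s i, r i} p" if i: "i \<in> OC" for i
    proof (rule even_clique_pm)
      have si: "s i \<in> W" using sC OCc CW i by blast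
      have ri: "r i \<in> U" using r(2) i by blast
      have ne: "s i \<noteq> r i" using si ri by (auto simp: W_def)
      show "finite {s i, r i}" by simp
      show "even (card {s i, r i})" using ne by simp
      have "A (s i) (r i)" "A (r i) (s i)" using univ univ2 ri si ne by (auto simp: W_def)
      then show "\<forall>x\<in>{s i, r i}. \<forall>y\<in>{s i, r i}. x \<noteq> y \<longrightarrow> A x y" by auto
    qed
  qed
  have pm3: "\<exists>p. inv_pm A X3 p" unfolding X3_def
  proof (rule even_clique_pm)
    show "finite (U - r ` OC)" using finU by simp
    have "card (r ` OC) = card OC" using r(1) by (rule card_image)
    then have "card (U - r ` OC) = card U - card OC" using r(2) finU by (simp add: card_Diff_subset finite_subset)
    moreover have "even (card U - card OC)"
      using evV cardV evW kU by (simp add: even_diff_nat)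
    ultimately show "even (card (U - r ` OC))" by simp
    show "\<forall>x\<in>U - r ` OC. \<forall>y\<in>U - r ` OC. x \<noteq> y \<longrightarrow> A x y" using univ UV by blast
  qed
  have d12: "X1 \<inter> X2 = {}"
  proof (rule ccontr)
    assume "X1 \<inter> X2 \<noteq> {}"
    then obtain x C C' where x: "C \<in> comps A W" "x \<in> B1 C" "C' \<in> OC" "x \<in> {s C', r C'}"
      unfolding X1_def X2_def by blast
    have xC: "x \<in> C" using x(2) by (auto simp: B1_def split: if_splits)
    then have "x \<in> W" using CW[OF x(1)] by blast
    moreover have "r C' \<in> U" using r(2) x(3) by blast
    ultimately have xs: "x = s C'" using x(4) by (auto simp: W_def)
    then have "x \<in> C'" using sC OCc x(3) by blast
    then have "C = C'" using cdisj[OF x(1) OCc[OF x(3)]] xC by blast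
    then have "odd (card C)" using x(3) by (simp add: OC_def ocomps_def)
    then show False using x(2) xs \<open>C = C'\<close> by (simp add: B1_def)
  qed
  have X1W: "X1 \<subseteq> W" unfolding X1_def B1_def using CW by auto
  have d13: "X1 \<inter> X3 = {}" using X1W by (auto simp: X3_def W_def)
  have d23: "X2 \<inter> X3 = {}"
  proof -
    have "s C \<in> W" if "C \<in> OC" for C using sC OCc CW that by blast
    then show ?thesis unfolding X2_def X3_def W_def by auto
  qed
  have cover: "X1 \<union> X2 \<union> X3 = V"
  proof
    show "X1 \<union> X2 \<union> X3 \<subseteq> V"
    proof -
      have "X2 \<subseteq> V"
      proof -
        have "s C \<in> W" if "C \<in> OC" for C using sC OCc CW that by blast
        then show ?thesis using r(2) UV unfolding X2_def W_def by auto
      qed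
      then show ?thesis using X1W UV by (auto simp: W_def X3_def)
    qed
    show "V \<subseteq> X1 \<union> X2 \<union> X3"
    proof
      fix v assume v: "v \<in> V"
      show "v \<in> X1 \<union> X2 \<union> X3"
      proof (cases "v \<in> U")
        case True
        then show ?thesis unfolding X2_def X3_def by auto
      next
        case False
        then have "v \<in> W" using v by (simp add: W_def)
        then have "v \<in> \<Union>(comps A W)" by (simp add: Union_comps)
        then obtain C where C: "C \<in> comps A W" "v \<in> C" by blast
        show ?thesis
        proof (cases "even (card C) \<or> v \<noteq> s C")
          case True
          then have "v \<in> B1 C" using C by (auto simp: B1_def)
          then show ?thesis unfolding X1_def using C by blast
        next
          case False
          then have "C \<in> OC" using C by (simp add: OC_def ocomps_def)
          then show ?thesis unfolding X2_def using False by blast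
        qed
      qed
    qed
  qed
  have "\<exists>p. inv_pm A (\<Union>{X1, X2, X3}) p"
  proof (rule glue_pm)
    show "finite {X1, X2, X3}" by simp
    show "\<forall>B1\<in>{X1, X2, X3}. \<forall>B2\<in>{X1, X2, X3}. B1 \<noteq> B2 \<longrightarrow> B1 \<inter> B2 = {}"
      using d12 d13 d23 by blast
    show "\<forall>B\<in>{X1, X2, X3}. \<exists>p. inv_pm A B p" using pm1 pm2 pm3 by blast
  qed
  moreover have "\<Union>{X1, X2, X3} = V" using cover by auto
  ultimately show ?thesis by simp
qed



lemma tutte_thm:
  assumes "finite V" "symr A" "tutte A V"
  shows "\<exists>p. inv_pm A V p"
  using assms(2,3)
proof (induction "card {(x, y). x \<in> V \<and> y \<in> V \<and> \<not> A x y}" arbitrary: A rule: less_induct)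
  case less
  note fin = assms(1)
  define U where "U = {v\<in>V. \<forall>w\<in>V. w \<noteq> v \<longrightarrow> A v w}"
  define W where "W = V - U"
  show ?case
  proof (cases "\<forall>C\<in>comps A (V - U). \<forall>x\<in>C. \<forall>y\<in>C. x \<noteq> y \<longrightarrow> A x y")
    case True
    show ?thesis by (rule clique_case[OF fin less.prems(1) less.prems(2) U_def True])
  next
    case False
    then obtain C x z where C: "C \<in> comps A W" "x \<in> C" "z \<in> C" "x \<noteq> z" "\<not> A x z"
      unfolding W_def by blast
    have xW: "x \<in> W" using comps_sub[OF C(1)] C(2) by blast
    have "C = comp A W x" using comps_eq_of_mem[OF less.prems(1) C(1) C(2)] .
    then have "(rel_in A W)\<^sup>*\<^sup>* x z" using C(3) by (simp add: comp_def)
    from p3_lemma[OF this xW] C(4,5) obtain a b c where abc: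
      "a \<in> W" "b \<in> W" "c \<in> W" "A a b" "A b c" "\<not> A a c" "a \<noteq> b" "b \<noteq> c" "a \<noteq> c"
      by auto
    have WV: "W \<subseteq> V" by (simp add: W_def)
    have inV: "a \<in> V" "b \<in> V" "c \<in> V" using abc WV by auto
    have "b \<notin> U" using abc(2) by (simp add: W_def)
    then obtain d where d: "d \<in> V" "d \<noteq> b" "\<not> A b d" using inV(2) unfolding U_def by auto
    define A1 where "A1 = (\<lambda>u v. A u v \<or> (u = a \<and> v = c) \<or> (u = c \<and> v = a))"
    define A2 where "A2 = (\<lambda>u v. A u v \<or> (u = b \<and> v = d) \<or> (u = d \<and> v = b))"
    have sA1: "symr A1" using less.prems(1) unfolding A1_def symr_def by blast
    have sA2: "symr A2" using less.prems(1) unfolding A2_def symr_def by blast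
    have tA1: "tutte A1 V" by (rule tutte_mono[OF less.prems(1) sA1 _ fin less.prems(2)]) (simp add: A1_def)
    have tA2: "tutte A2 V" by (rule tutte_mono[OF less.prems(1) sA2 _ fin less.prems(2)]) (simp add: A2_def)
    have finS: "finite {(x, y). x \<in> V \<and> y \<in> V \<and> \<not> A x y}"
      by (rule finite_subset[of _ "V \<times> V"]) (auto simp: fin)
    have lt1: "card {(x, y). x \<in> V \<and> y \<in> V \<and> \<not> A1 x y} < card {(x, y). x \<in> V \<and> y \<in> V \<and> \<not> A x y}"
    proof (rule psubset_card_mono[OF finS])
      have "(a, c) \<in> {(x, y). x \<in> V \<and> y \<in> V \<and> \<not> A x y}" using inV abc by simp
      moreover have "(a, c) \<notin> {(x, y). x \<in> V \<and> y \<in> V \<and> \<not> A1 x y}" by (simp add: A1_def)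
      moreover have "{(x, y). x \<in> V \<and> y \<in> V \<and> \<not> A1 x y} \<subseteq> {(x, y). x \<in> V \<and> y \<in> V \<and> \<not> A x y}"
        by (auto simp: A1_def)
      ultimately show "{(x, y). x \<in> V \<and> y \<in> V \<and> \<not> A1 x y} \<subset> {(x, y). x \<in> V \<and> y \<in> V \<and> \<not> A x y}"
        by blast
    qed
    have lt2: "card {(x, y). x \<in> V \<and> y \<in> V \<and> \<not> A2 x y} < card {(x, y). x \<in> V \<and> y \<in> V \<and> \<not> A x y}"
    proof (rule psubset_card_mono[OF finS])
      have "(b, d) \<in> {(x, y). x \<in> V \<and> y \<in> V \<and> \<not> A x y}" using inV d by simp
      moreover have "(b, d) \<notin> {(x, y). x \<in> V \<and> y \<in> V \<and> \<not> A2 x y}" by (simp add: A2_def)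
      moreover have "{(x, y). x \<in> V \<and> y \<in> V \<and> \<not> A2 x y} \<subseteq> {(x, y). x \<in> V \<and> y \<in> V \<and> \<not> A x y}"
        by (auto simp: A2_def)
      ultimately show "{(x, y). x \<in> V \<and> y \<in> V \<and> \<not> A2 x y} \<subset> {(x, y). x \<in> V \<and> y \<in> V \<and> \<not> A x y}"
        by blast
    qed
    obtain p1 where p1: "inv_pm A1 V p1" using less.hyps[OF lt1 sA1 tA1] by blast
    obtain p2 where p2: "inv_pm A2 V p2" using less.hyps[OF lt2 sA2 tA2] by blast
    show ?thesis
    proof (cases "p1 a = c")
      case False
      have "inv_pm A V p1" by (rule inv_pm_drop[OF p1[unfolded A1_def] False inV(1) inV(3)])
      then show ?thesis by blast
    next
      case p1a: True
      show ?thesis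
      proof (cases "p2 b = d")
        case False
        have "inv_pm A V p2" by (rule inv_pm_drop[OF p2[unfolded A2_def] False inV(2) d(1)])
        then show ?thesis by blast
      next
        case p2b: True
        have "swapctx V A a b c d p1 p2"
          using fin less.prems(1) inV d abc p1[unfolded A1_def] p1a p2[unfolded A2_def] p2b
          by (unfold_locales) auto
        then show ?thesis by (rule swapctx.swap_exists)
      qed
    qed
  qed
qed



definition delta :: "('v,'e) mgraph \<Rightarrow> 'v set \<Rightarrow> 'e set" where
  "delta G C = {f\<in>edges G. card (ends G f \<inter> C) = 1}"

lemma mg_edge: "mgraph G \<Longrightarrow> f \<in> edges G \<Longrightarrow> card (ends G f) = 2 \<and> ends G f \<subseteq> verts G"
  by (simp add: mgraph_def)

lemma card2_other: assumes "card X = 2" "s \<in> X" shows "\<exists>t. X = {s, t} \<and> t \<noteq> s"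
proof -
  have fin: "finite X" using assms(1) by (intro card_ge_0_finite) simp
  have "card (X - {s}) = 1" using assms fin by simp
  then obtain t where t: "X - {s} = {t}" using card_1_singleton_iff by (metis One_nat_def)
  then have "X = {s, t}" using assms(2) by blast
  moreover have "t \<noteq> s" using t by blast
  ultimately show ?thesis by blast
qed

lemma cubic_even: assumes "cubic G" shows "even (card (verts G))"
proof -
  have mg: "mgraph G" using assms by (simp add: cubic_def)
  have fV: "finite (verts G)" and fE: "finite (edges G)" using mg by (auto simp: mgraph_def)
  have "(\<Sum>v\<in>verts G. card {e\<in>edges G. v \<in> ends G e}) = (\<Sum>e\<in>edges G. card (ends G e \<inter> verts G))"
    by (rule double_count[OF fV fE])
  also have "\<dots> = (\<Sum>e\<in>edges G. 2)"
  proof (rule sum.cong)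
    fix e assume "e \<in> edges G"
    then have "card (ends G e) = 2" "ends G e \<subseteq> verts G" using mg_edge[OF mg] by auto
    then show "card (ends G e \<inter> verts G) = 2" by (simp add: Int_absorb2)
  qed simp
  finally have "(\<Sum>v\<in>verts G. card {e\<in>edges G. v \<in> ends G e}) = 2 * card (edges G)" by simp
  moreover have "(\<Sum>v\<in>verts G. card {e\<in>edges G. v \<in> ends G e}) = 3 * card (verts G)"
    using assms by (simp add: cubic_def degree_def)
  ultimately have "3 * card (verts G) = 2 * card (edges G)" by simp
  then show ?thesis by presburger
qed

lemma delta_odd:
  assumes "cubic G" "C \<subseteq> verts G" "odd (card C)"
  shows "odd (card (delta G C))"
proof -
  have mg: "mgraph G" using assms by (simp add: cubic_def)
  have fV: "finite (verts G)" and fE: "finite (edges G)" using mg by (auto simp: mgraph_def)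
  have fC: "finite C" using assms(2) fV finite_subset by blast
  have "(\<Sum>v\<in>C. card {e\<in>edges G. v \<in> ends G e}) = (\<Sum>e\<in>edges G. card (ends G e \<inter> C))"
    by (rule double_count[OF fC fE])
  moreover have "(\<Sum>v\<in>C. card {e\<in>edges G. v \<in> ends G e}) = 3 * card C"
  proof -
    have "(\<Sum>v\<in>C. card {e\<in>edges G. v \<in> ends G e}) = (\<Sum>v\<in>C. 3)"
      using assms(1,2) by (intro sum.cong) (auto simp: cubic_def degree_def)
    then show ?thesis by simp
  qed
  ultimately have s: "(\<Sum>e\<in>edges G. card (ends G e \<inter> C)) = 3 * card C" by simp
  have "{e\<in>edges G. odd (card (ends G e \<inter> C))} = delta G C"
  proof -
    have "odd (card (ends G e \<inter> C)) \<longleftrightarrow> card (ends G e \<inter> C) = 1" if "e \<in> edges G" for e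
    proof -
      have "card (ends G e) = 2" using mg_edge[OF mg that] by simp
      moreover have "finite (ends G e)" using calculation by (intro card_ge_0_finite) simp
      ultimately have "card (ends G e \<inter> C) \<le> 2" by (metis card_mono inf_le1)
      then show ?thesis by presburger
    qed
    then show ?thesis unfolding delta_def by blast
  qed
  then show ?thesis using even_sum_iff[OF fE, of "\<lambda>e. card (ends G e \<inter> C)"] s assms(3) by simp
qed

lemma delta_ge3:
  assumes cub: "cubic G" and bl: "bridgeless G" and CV: "C \<subseteq> verts G" and oC: "odd (card C)"
  shows "3 \<le> card (delta G C)"
proof -
  have mg: "mgraph G" using cub by (simp add: cubic_def)
  have od: "odd (card (delta G C))" using delta_odd[OF cub CV oC] .
  have "card (delta G C) \<noteq> 1"
  proof
    assume "card (delta G C) = 1"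
    then obtain f where df: "delta G C = {f}" using card_1_singleton_iff by (metis One_nat_def)
    then have fE: "f \<in> edges G" and c1: "card (ends G f \<inter> C) = 1" by (auto simp: delta_def)
    obtain s where s: "ends G f \<inter> C = {s}" using c1 card_1_singleton_iff by (metis One_nat_def)
    then have sf: "s \<in> ends G f" "s \<in> C" by auto
    have c2: "card (ends G f) = 2" using mg_edge[OF mg fE] by simp
    obtain t where t: "ends G f = {s, t}" "t \<noteq> s" using card2_other[OF c2 sf(1)] by (elim exE conjE)
    have tC: "t \<notin> C"
    proof
      assume "t \<in> C"
      then have "t \<in> ends G f \<inter> C" using t(1) by simp
      then show False using s t(2) by simp
    qed
    let ?R = "adj_in G (edges G - {f})"
    have reach: "z \<in> C" if "?R\<^sup>*\<^sup>* s z" for z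
      using that
    proof (induction rule: rtranclp_induct)
      case base then show ?case using sf by simp
    next
      case (step y z)
      then obtain e where e: "e \<in> edges G - {f}" "e \<in> edges G" "ends G e = {y, z}" "y \<noteq> z"
        unfolding adj_in_def by blast
      show ?case
      proof (rule ccontr)
        assume "z \<notin> C"
        then have "ends G e \<inter> C = {y}" using e(3) step.IH by auto
        then have "e \<in> delta G C" using e(2) by (simp add: delta_def)
        then show False using df e(1) by auto
      qed
    qed
    have "\<not> ?R\<^sup>*\<^sup>* s t" using reach tC by blast
    then have "is_bridge G f"
      unfolding is_bridge_def using fE t(1) by blast
    then show False using bl fE by (simp add: bridgeless_def)
  qed
  then show ?thesis using od by presburger
qed



lemma cubic_tutte:
  assumes cub: "cubic G" and bl: "bridgeless G" and finX: "finite X" and cX: "card X \<le> 2"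
    and XE: "X \<subseteq> edges G"
    and A_def: "A = (\<lambda>v w. (\<exists>f\<in>edges G - X. ends G f = {v, w}) \<and> v \<noteq> w)"
  shows "tutte A (verts G)"
  unfolding tutte_def
proof (intro allI impI)
  fix S assume SV: "S \<subseteq> verts G"
  have mg: "mgraph G" using cub by (simp add: cubic_def)
  have fV: "finite (verts G)" and fE: "finite (edges G)" using mg by (auto simp: mgraph_def)
  have sA: "symr A" unfolding symr_def A_def by (auto simp: insert_commute)
  define W where "W = verts G - S"
  define OC where "OC = ocomps A W"
  have finW: "finite W" using fV by (simp add: W_def)
  have finOC: "finite OC" unfolding OC_def using finW by (rule finite_ocomps)
  have finS: "finite S" using SV fV finite_subset by blast
  have OCc: "C \<in> comps A W" if "C \<in> OC" for C using that by (simp add: OC_def ocomps_def)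
  have OCW: "C \<subseteq> W" if "C \<in> OC" for C using comps_sub[OF OCc[OF that]] .
  have OCodd: "odd (card C)" if "C \<in> OC" for C using that by (simp add: OC_def ocomps_def)
  define ES where "ES = {f\<in>edges G. ends G f \<inter> S \<noteq> {}}"
  define F where "F = ES \<union> X"
  have finES: "finite ES" using fE by (simp add: ES_def)
  have finF: "finite F" using finES finX by (simp add: F_def)
  have c2: "card (ends G f) = 2" if "f \<in> edges G" for f using mg_edge[OF mg that] by simp
  have eV: "ends G f \<subseteq> verts G" if "f \<in> edges G" for f using mg_edge[OF mg that] by simp
  have fends: "finite (ends G f)" if "f \<in> edges G" for f using c2[OF that] by (intro card_ge_0_finite) simp
  have dF: "delta G C \<subseteq> F" if C: "C \<in> OC" for C
  proof
    fix f assume fd: "f \<in> delta G C"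
    then have fE': "f \<in> edges G" and c1: "card (ends G f \<inter> C) = 1" by (auto simp: delta_def)
    show "f \<in> F"
    proof (rule ccontr)
      assume nF: "f \<notin> F"
      obtain s where s: "ends G f \<inter> C = {s}" using c1 card_1_singleton_iff by (metis One_nat_def)
      then have sf: "s \<in> ends G f" "s \<in> C" by auto
      obtain t where t: "ends G f = {s, t}" "t \<noteq> s" using card2_other[OF c2[OF fE'] sf(1)] by (elim exE conjE)
      have tC: "t \<notin> C"
      proof
        assume "t \<in> C"
        then have "t \<in> ends G f \<inter> C" using t(1) by simp
        then show False using s t(2) by simp
      qed
      have tV: "t \<in> verts G" using eV[OF fE'] t(1) by auto
      have tS: "t \<notin> S"
      proof
        assume "t \<in> S"
        then have "f \<in> ES" using fE' t(1) by (auto simp: ES_def)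
        then show False using nF by (simp add: F_def)
      qed
      have tW: "t \<in> W" using tV tS by (simp add: W_def)
      have "f \<in> edges G - X" using fE' nF by (simp add: F_def)
      then have "A s t" unfolding A_def using t by blast
      then have "t \<in> C" using comps_closed[OF sA OCc[OF C] sf(2) tW] by simp
      then show False using tC by simp
    qed
  qed
  have d3: "3 \<le> card (delta G C)" if C: "C \<in> OC" for C
  proof (rule delta_ge3[OF cub bl])
    show "C \<subseteq> verts G" using OCW[OF C] by (auto simp: W_def)
    show "odd (card C)" using OCodd[OF C] .
  qed
  have sumeq: "(\<Sum>C\<in>OC. card (delta G C)) = (\<Sum>f\<in>F. card ({C. f \<in> delta G C} \<inter> OC))"
  proof -
    have "(\<Sum>C\<in>OC. card {f\<in>F. C \<in> {C. f \<in> delta G C}}) = (\<Sum>f\<in>F. card ({C. f \<in> delta G C} \<inter> OC))"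
      by (rule double_count[OF finOC finF])
    moreover have "{f\<in>F. C \<in> {C. f \<in> delta G C}} = delta G C" if "C \<in> OC" for C
      using dF[OF that] by auto
    ultimately show ?thesis by simp
  qed
  have dle: "card ({C. f \<in> delta G C} \<inter> OC) \<le> card (ends G f - S)" if fE': "f \<in> edges G" for f
  proof -
    have "{C. f \<in> delta G C} \<inter> OC \<subseteq> comp A W ` (ends G f - S)"
    proof
      fix C assume "C \<in> {C. f \<in> delta G C} \<inter> OC"
      then have fd: "f \<in> delta G C" and C: "C \<in> OC" by auto
      then have "card (ends G f \<inter> C) = 1" by (simp add: delta_def)
      then obtain y where y: "ends G f \<inter> C = {y}" using card_1_singleton_iff by (metis One_nat_def)
      then have yf: "y \<in> ends G f" "y \<in> C" by auto
      then have "y \<notin> S" using OCW[OF C] by (auto simp: W_def)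
      moreover have "C = comp A W y" using comps_eq_of_mem[OF sA OCc[OF C] yf(2)] .
      ultimately show "C \<in> comp A W ` (ends G f - S)" using yf(1) by blast
    qed
    then have "card ({C. f \<in> delta G C} \<inter> OC) \<le> card (comp A W ` (ends G f - S))"
      using fends[OF fE'] by (intro card_mono) auto
    also have "\<dots> \<le> card (ends G f - S)" by (rule card_image_le) (simp add: fends[OF fE'])
    finally show ?thesis .
  qed
  have eES: "card (ends G f - S) \<le> 1" if fES: "f \<in> ES" for f
  proof -
    have fE': "f \<in> edges G" using fES by (simp add: ES_def)
    obtain z where z: "z \<in> ends G f" "z \<in> S" using fES by (auto simp: ES_def)
    have "ends G f - S \<subseteq> ends G f - {z}" using z by auto
    then have "card (ends G f - S) \<le> card (ends G f - {z})" using fends[OF fE'] by (intro card_mono) auto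
    also have "\<dots> = 1" using c2[OF fE'] z(1) fends[OF fE'] by simp
    finally show ?thesis .
  qed
  have eall: "card (ends G f - S) \<le> 2" if "f \<in> edges G" for f
  proof -
    have "card (ends G f - S) \<le> card (ends G f)" using fends[OF that] by (intro card_mono) auto
    then show ?thesis using c2[OF that] by simp
  qed
  define g where "g f = card ({C. f \<in> delta G C} \<inter> OC)" for f
  have FE: "F \<subseteq> edges G" using XE by (auto simp: F_def ES_def)
  have "(\<Sum>f\<in>F. g f) \<le> (\<Sum>f\<in>ES. g f) + (\<Sum>f\<in>X. g f)"
    unfolding F_def using sum_Un_nat[OF finES finX, of g] by simp
  also have "(\<Sum>f\<in>ES. g f) \<le> (\<Sum>f\<in>ES. 1)"
  proof (rule sum_mono)
    fix f assume f: "f \<in> ES"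
    then have "f \<in> edges G" by (simp add: ES_def)
    then show "g f \<le> 1" using dle eES[OF f] unfolding g_def by (meson le_trans)
  qed
  also have "(\<Sum>f\<in>X. g f) \<le> (\<Sum>f\<in>X. 2)"
  proof (rule sum_mono)
    fix f assume f: "f \<in> X"
    then have "f \<in> edges G" using XE by blast
    then show "g f \<le> 2" using dle eall unfolding g_def by (meson le_trans)
  qed
  finally have sF: "(\<Sum>f\<in>F. g f) \<le> card ES + 2 * card X" by simp
  have cES: "card ES \<le> 3 * card S"
  proof -
    have "ES = (\<Union>v\<in>S. {f\<in>edges G. v \<in> ends G f})" by (auto simp: ES_def)
    then have "card ES \<le> (\<Sum>v\<in>S. card {f\<in>edges G. v \<in> ends G f})"
      using card_UN_le[OF finS] by simp
    also have "\<dots> = (\<Sum>v\<in>S. 3)"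
      using cub SV by (intro sum.cong) (auto simp: cubic_def degree_def)
    finally show ?thesis by simp
  qed
  have "3 * card OC = (\<Sum>C\<in>OC. 3)" by simp
  also have "\<dots> \<le> (\<Sum>C\<in>OC. card (delta G C))" using d3 by (rule sum_mono)
  also have "\<dots> = (\<Sum>f\<in>F. g f)" using sumeq by (simp add: g_def)
  finally have main: "3 * card OC \<le> 3 * card S + 4" using sF cES cX by linarith
  have evV: "even (card (verts G))" using cubic_even[OF cub] .
  have cW: "card W = card (verts G) - card S" unfolding W_def using SV finS by (simp add: card_Diff_subset)
  have SleV: "card S \<le> card (verts G)" using SV fV by (simp add: card_mono)
  have "even (card W) \<longleftrightarrow> even (card OC)" unfolding OC_def by (rule even_card_ocomps[OF sA finW])
  then have par: "even (card OC) \<longleftrightarrow> even (card S)" using cW evV SleV by (simp add: even_diff_nat)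
  show "card (ocomps A (verts G - S)) \<le> card S"
  proof -
    have "card OC \<le> card S" using main par by presburger
    then show ?thesis by (simp add: OC_def W_def)
  qed
qed

lemma edge_in_pm:
  assumes cub: "cubic G" and bl: "bridgeless G" and e0: "e0 \<in> edges G"
  shows "\<exists>M. perfect_matching G M \<and> e0 \<in> M"
proof -
  have mg: "mgraph G" using cub by (simp add: cubic_def)
  have fV: "finite (verts G)" and fE: "finite (edges G)" using mg by (auto simp: mgraph_def)
  have c2: "card (ends G e0) = 2" using mg_edge[OF mg e0] by simp
  then have "ends G e0 \<noteq> {}" by auto
  then obtain u where u: "u \<in> ends G e0" by blast
  have uV: "u \<in> verts G" using mg_edge[OF mg e0] u by blast
  define X where "X = {f\<in>edges G. u \<in> ends G f} - {e0}"
  have finX: "finite X" using fE by (simp add: X_def)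
  have XE: "X \<subseteq> edges G" by (auto simp: X_def)
  have "card {f\<in>edges G. u \<in> ends G f} = 3" using cub uV by (simp add: cubic_def degree_def)
  then have cX: "card X = 2" unfolding X_def using e0 u fE by simp
  define A where "A = (\<lambda>v w. (\<exists>f\<in>edges G - X. ends G f = {v, w}) \<and> v \<noteq> w)"
  have sA: "symr A" unfolding symr_def A_def by (auto simp: insert_commute)
  have tut: "tutte A (verts G)" by (rule cubic_tutte[OF cub bl finX _ XE A_def]) (simp add: cX)
  obtain p where p: "inv_pm A (verts G) p" using tutte_thm[OF fV sA tut] by blast
  define phi where "phi Y = (SOME f. f \<in> edges G - X \<and> ends G f = Y)" for Y
  have phi: "phi {v, p v} \<in> edges G - X \<and> ends G (phi {v, p v}) = {v, p v}" if "v \<in> verts G" for v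
  proof -
    have "A v (p v)" using p that by (simp add: inv_pm_def)
    then have "\<exists>f. f \<in> edges G - X \<and> ends G f = {v, p v}" unfolding A_def by blast
    then show ?thesis unfolding phi_def by (rule someI_ex)
  qed
  define M where "M = (\<lambda>v. phi {v, p v}) ` verts G"
  have pmM: "perfect_matching G M"
    unfolding perfect_matching_def
  proof
    show "M \<subseteq> edges G" unfolding M_def using phi by blast
    show "\<forall>v\<in>verts G. card {e \<in> M. v \<in> ends G e} = 1"
    proof
      fix v assume v: "v \<in> verts G"
      have "\<exists>!e. e \<in> M \<and> v \<in> ends G e"
      proof
        show "phi {v, p v} \<in> M \<and> v \<in> ends G (phi {v, p v})" using phi[OF v] v unfolding M_def by auto
        fix e assume e: "e \<in> M \<and> v \<in> ends G e"
        then obtain w where w: "w \<in> verts G" "e = phi {w, p w}" unfolding M_def by blast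
        have "v \<in> {w, p w}" using e w phi[OF w(1)] by simp
        then have "{w, p w} = {v, p v}"
        proof
          assume "v = w" then show ?thesis by simp
        next
          assume "v \<in> {p w}"
          then have "v = p w" by simp
          then have "p v = w" using p w(1) by (simp add: inv_pm_def)
          then show ?thesis using \<open>v = p w\<close> by auto
        qed
        then show "e = phi {v, p v}" using w(2) by simp
      qed
      then show "card {e \<in> M. v \<in> ends G e} = 1" using card_eq1_iff_ex1 by (metis (no_types, lifting))
    qed
  qed
  have "e0 \<in> M"
  proof -
    have f: "phi {u, p u} \<in> edges G - X" "ends G (phi {u, p u}) = {u, p u}" using phi[OF uV] by auto
    then have "phi {u, p u} = e0" unfolding X_def by auto
    then show ?thesis unfolding M_def using uV by force
  qed
  then show ?thesis using pmM by blast
qed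



lemma pm_ex1: "perfect_matching G M \<longleftrightarrow> M \<subseteq> edges G \<and> (\<forall>v\<in>verts G. \<exists>!e. e \<in> M \<and> v \<in> ends G e)"
  unfolding perfect_matching_def by (simp only: card_eq1_iff_ex1)

lemma pm_unique_at:
  assumes "perfect_matching G M" "v \<in> verts G" "e1 \<in> M" "e2 \<in> M" "v \<in> ends G e1" "v \<in> ends G e2"
  shows "e1 = e2"
  using assms unfolding pm_ex1 by blast

lemma pm_finite: "finite (edges G) \<Longrightarrow> finite {M. perfect_matching G M \<and> Q M}"
  by (rule finite_subset[of _ "Pow (edges G)"]) (auto simp: perfect_matching_def)

lemma matching_count:
  assumes "finite W" "finite F" "\<forall>a\<in>F. h a \<subseteq> W \<and> card (h a) = 2"
    "\<forall>w\<in>W. \<exists>!a. a \<in> F \<and> w \<in> h a"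
  shows "card W = 2 * card F"
proof -
  have "(\<Sum>w\<in>W. card {a\<in>F. w \<in> h a}) = (\<Sum>a\<in>F. card (h a \<inter> W))"
    by (rule double_count[OF assms(1,2)])
  moreover have "(\<Sum>w\<in>W. card {a\<in>F. w \<in> h a}) = (\<Sum>w\<in>W. 1)"
  proof (rule sum.cong)
    fix w assume "w \<in> W"
    then have "\<exists>!a. a \<in> F \<and> w \<in> h a" using assms(4) by blast
    then show "card {a\<in>F. w \<in> h a} = 1" by (simp only: card_eq1_iff_ex1)
  qed simp
  moreover have "(\<Sum>a\<in>F. card (h a \<inter> W)) = (\<Sum>a\<in>F. 2)"
  proof (rule sum.cong)
    fix a assume "a \<in> F"
    then have "h a \<subseteq> W" "card (h a) = 2" using assms(3) by auto
    then show "card (h a \<inter> W) = 2" by (simp add: Int_absorb2)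
  qed simp
  ultimately show ?thesis by simp
qed

lemma two_avoid:
  assumes cub: "cubic G" and bl: "bridgeless G" and f: "f \<in> edges G"
  shows "2 \<le> card {M. perfect_matching G M \<and> f \<notin> M}"
proof -
  have mg: "mgraph G" using cub by (simp add: cubic_def)
  have fE: "finite (edges G)" using mg by (simp add: mgraph_def)
  have "card (ends G f) = 2" using mg_edge[OF mg f] by simp
  then have "ends G f \<noteq> {}" by auto
  then obtain x where x: "x \<in> ends G f" by blast
  have xV: "x \<in> verts G" using mg_edge[OF mg f] x by blast
  define Y where "Y = {g\<in>edges G. x \<in> ends G g} - {f}"
  have "card {g\<in>edges G. x \<in> ends G g} = 3" using cub xV by (simp add: cubic_def degree_def)
  then have "card Y = 2" unfolding Y_def using f x fE by simp
  then obtain g h where gh: "Y = {g, h}" "g \<noteq> h" by (meson card_2_iff)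
  have g: "g \<in> edges G" "x \<in> ends G g" "g \<noteq> f" using gh unfolding Y_def by auto
  have h: "h \<in> edges G" "x \<in> ends G h" "h \<noteq> f" using gh unfolding Y_def by blast+
  obtain Mg where Mg: "perfect_matching G Mg" "g \<in> Mg" using edge_in_pm[OF cub bl g(1)] by blast
  obtain Mh where Mh: "perfect_matching G Mh" "h \<in> Mh" using edge_in_pm[OF cub bl h(1)] by blast
  have fMg: "f \<notin> Mg"
  proof
    assume "f \<in> Mg"
    then have "f = g" using pm_unique_at[OF Mg(1) xV _ Mg(2) x g(2)] by simp
    then show False using g(3) by simp
  qed
  have fMh: "f \<notin> Mh"
  proof
    assume "f \<in> Mh"
    then have "f = h" using pm_unique_at[OF Mh(1) xV _ Mh(2) x h(2)] by simp
    then show False using h(3) by simp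
  qed
  have "Mg \<noteq> Mh"
  proof
    assume "Mg = Mh"
    then have "h \<in> Mg" using Mh by simp
    then have "g = h" using pm_unique_at[OF Mg(1) xV Mg(2) _ g(2) h(2)] by simp
    then show False using gh(2) by simp
  qed
  then have "card {Mg, Mh} = 2" by simp
  moreover have "{Mg, Mh} \<subseteq> {M. perfect_matching G M \<and> f \<notin> M}" using Mg Mh fMg fMh by auto
  ultimately show ?thesis using card_mono[OF pm_finite[OF fE]] by metis
qed

lemma one_contain:
  assumes cub: "cubic G" and bl: "bridgeless G" and f: "f \<in> edges G"
  shows "1 \<le> card {M. perfect_matching G M \<and> f \<in> M}"
proof -
  have mg: "mgraph G" using cub by (simp add: cubic_def)
  have fE: "finite (edges G)" using mg by (simp add: mgraph_def)
  obtain M where "perfect_matching G M" "f \<in> M" using edge_in_pm[OF assms] by blast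
  then have "{M. perfect_matching G M \<and> f \<in> M} \<noteq> {}" by blast
  then show ?thesis using pm_finite[OF fE] by (simp add: Suc_le_eq card_gt_0_iff)
qed



lemma Inl_img_iff[simp]: "Inl w \<in> Inl ` S \<longleftrightarrow> w \<in> S" "Inl w \<notin> Inr ` S'" "Inr z \<in> Inr ` S' \<longleftrightarrow> z \<in> S'" "Inr z \<notin> Inl ` S"
  by auto

locale ccx =
  fixes G1 :: "('v1,'e1) mgraph" and G2 :: "('v2,'e2) mgraph"
    and f1 :: 'e1 and x1 y1 :: 'v1 and f2 :: 'e2 and x2 y2 :: 'v2
    and G :: "('v1 + 'v2, ('e1,'e2) cedge) mgraph"
  assumes cub1: "cubic G1" and cub2: "cubic G2"
    and f1: "f1 \<in> edges G1" and e1: "ends G1 f1 = {x1, y1}"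
    and f2: "f2 \<in> edges G2" and e2: "ends G2 f2 = {x2, y2}"
    and Gdef: "G = cut_conn G1 f1 x1 y1 G2 f2 x2 y2"
begin

lemma mg1: "mgraph G1" using cub1 by (simp add: cubic_def)
lemma mg2: "mgraph G2" using cub2 by (simp add: cubic_def)

lemma xy1: "x1 \<noteq> y1" using mg_edge[OF mg1 f1] e1 by (auto simp: card_insert_if)
lemma xy2: "x2 \<noteq> y2" using mg_edge[OF mg2 f2] e2 by (auto simp: card_insert_if)
lemma xV1: "x1 \<in> verts G1" "y1 \<in> verts G1" using mg_edge[OF mg1 f1] e1 by auto
lemma xV2: "x2 \<in> verts G2" "y2 \<in> verts G2" using mg_edge[OF mg2 f2] e2 by auto

lemma vG: "verts G = Inl ` verts G1 \<union> Inr ` verts G2" by (simp add: Gdef cut_conn_def)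
lemma eG: "edges G = E1 ` (edges G1 - {f1}) \<union> E2 ` (edges G2 - {f2}) \<union> {XX, YY}"
  by (simp add: Gdef cut_conn_def)
lemma endsE1[simp]: "ends G (E1 a) = Inl ` ends G1 a" by (simp add: Gdef cut_conn_def)
lemma endsE2[simp]: "ends G (E2 b) = Inr ` ends G2 b" by (simp add: Gdef cut_conn_def)
lemma endsXX[simp]: "ends G XX = {Inl x1, Inr x2}" by (simp add: Gdef cut_conn_def)
lemma endsYY[simp]: "ends G YY = {Inl y1, Inr y2}" by (simp add: Gdef cut_conn_def)

lemma memE1[simp]: "Inl w \<in> ends G (E1 a) \<longleftrightarrow> w \<in> ends G1 a" "Inr z \<notin> ends G (E1 a)" by auto
lemma memE2[simp]: "Inr z \<in> ends G (E2 b) \<longleftrightarrow> z \<in> ends G2 b" "Inl w \<notin> ends G (E2 b)" by auto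

lemma E1_in[simp]: "E1 a \<in> edges G \<longleftrightarrow> a \<in> edges G1 \<and> a \<noteq> f1" by (auto simp: eG)
lemma E2_in[simp]: "E2 b \<in> edges G \<longleftrightarrow> b \<in> edges G2 \<and> b \<noteq> f2" by (auto simp: eG)
lemma XX_in[simp]: "XX \<in> edges G" "YY \<in> edges G" by (auto simp: eG)

lemma Inl_in[simp]: "Inl w \<in> verts G \<longleftrightarrow> w \<in> verts G1" by (auto simp: vG)
lemma Inr_in[simp]: "Inr z \<in> verts G \<longleftrightarrow> z \<in> verts G2" by (auto simp: vG)

lemma fin1: "finite (edges G1)" "finite (verts G1)" using mg1 by (auto simp: mgraph_def)
lemma fin2: "finite (edges G2)" "finite (verts G2)" using mg2 by (auto simp: mgraph_def)

lemma cedge_cases: "e \<in> edges G \<Longrightarrow> (\<exists>a. e = E1 a \<and> a \<in> edges G1 \<and> a \<noteq> f1) \<or> (\<exists>b. e = E2 b \<and> b \<in> edges G2 \<and> b \<noteq> f2) \<or> e = XX \<or> e = YY"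
  by (cases e) auto

lemma par_aux:
  assumes pm: "perfect_matching G M" and K: "K \<in> M" "K \<in> {XX, YY}" and K': "K' \<in> {XX, YY}" "K' \<noteq> K" "K' \<notin> M"
    and z: "z \<in> verts G1" "Inl z \<in> ends G K"
  shows False
proof -
  have ex1: "\<forall>v\<in>verts G. \<exists>!e. e \<in> M \<and> v \<in> ends G e" and ME: "M \<subseteq> edges G" using pm by (auto simp: pm_ex1)
  have Kz: "w = z" if "Inl w \<in> ends G K" for w using that z(2) K(2) by auto
  define W where "W = verts G1 - {z}"
  define F where "F = {a. E1 a \<in> M}"
  have FE: "F \<subseteq> edges G1" using ME by (auto simp: F_def)
  have finW: "finite W" using fin1 by (simp add: W_def)
  have finF: "finite F" using FE fin1 finite_subset by blast
  have hF: "\<forall>a\<in>F. ends G1 a \<subseteq> W \<and> card (ends G1 a) = 2"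
  proof
    fix a assume a: "a \<in> F"
    then have aE: "a \<in> edges G1" using FE by blast
    have "z \<notin> ends G1 a"
    proof
      assume "z \<in> ends G1 a"
      moreover have "E1 a \<in> M" using a by (simp add: F_def)
      moreover have "Inl z \<in> verts G" using z(1) by simp
      ultimately have "E1 a = K" using pm_unique_at[OF pm _ _ K(1) _ z(2), of "E1 a"] by simp
      then show False using K(2) by auto
    qed
    then show "ends G1 a \<subseteq> W \<and> card (ends G1 a) = 2" using mg_edge[OF mg1 aE] by (auto simp: W_def)
  qed
  have uF: "\<forall>w\<in>W. \<exists>!a. a \<in> F \<and> w \<in> ends G1 a"
  proof
    fix w assume w: "w \<in> W"
    then have wV: "Inl w \<in> verts G" and wz: "w \<noteq> z" by (auto simp: W_def)
    obtain e where e: "e \<in> M" "Inl w \<in> ends G e" using ex1 wV by blast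
    have "e \<in> edges G" using e(1) ME by blast
    then have "\<exists>a. e = E1 a"
    proof (elim cedge_cases[THEN disjE] disjE exE conjE)
      fix a assume "e = E1 a" then show ?thesis by blast
    next
      fix b assume "e = E2 b" then show ?thesis using e(2) by simp
    next
      assume "e = XX"
      then show ?thesis
      proof (cases "K = XX")
        case True then show ?thesis using Kz e(2) wz \<open>e = XX\<close> by blast
      next
        case False then have "K' = XX" using K K' by auto
        then show ?thesis using K'(3) e(1) \<open>e = XX\<close> by simp
      qed
    next
      assume "e = YY"
      then show ?thesis
      proof (cases "K = YY")
        case True then show ?thesis using Kz e(2) wz \<open>e = YY\<close> by blast
      next
        case False then have "K' = YY" using K K' by auto
        then show ?thesis using K'(3) e(1) \<open>e = YY\<close> by simp
      qed
    qed
    then obtain a where a: "e = E1 a" by blast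
    show "\<exists>!a. a \<in> F \<and> w \<in> ends G1 a"
    proof
      show "a \<in> F \<and> w \<in> ends G1 a" using e a by (simp add: F_def)
      fix a' assume a': "a' \<in> F \<and> w \<in> ends G1 a'"
      then have "E1 a' \<in> M" "Inl w \<in> ends G (E1 a')" by (auto simp: F_def)
      then have "E1 a' = e" using pm_unique_at[OF pm wV _ e(1) _ e(2)] by simp
      then show "a' = a" using a by simp
    qed
  qed
  have "card W = 2 * card F" by (rule matching_count[OF finW finF hF uF])
  moreover have "card W = card (verts G1) - 1" using z(1) fin1 by (simp add: W_def)
  moreover have "even (card (verts G1))" using cubic_even[OF cub1] .
  moreover have "card (verts G1) \<noteq> 0" using z(1) fin1 by auto
  ultimately show False by presburger
qed

lemma parity: "perfect_matching G M \<Longrightarrow> XX \<in> M \<longleftrightarrow> YY \<in> M"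
  using par_aux[of M XX YY x1] par_aux[of M YY XX y1] xV1 by auto

end

context ccx begin

definition Phi where
  "Phi M1 M2 = (if f1 \<in> M1 then E1 ` (M1 - {f1}) \<union> E2 ` (M2 - {f2}) \<union> {XX, YY} else E1 ` M1 \<union> E2 ` M2)"
definition r1 where "r1 M = {a. E1 a \<in> M} \<union> (if XX \<in> M then {f1} else {})"
definition r2 where "r2 M = {b. E2 b \<in> M} \<union> (if XX \<in> M then {f2} else {})"
definition PP where "PP = {(M1, M2). perfect_matching G1 M1 \<and> perfect_matching G2 M2 \<and> (f1 \<in> M1 \<longleftrightarrow> f2 \<in> M2)}"

lemma Phi_E1: "E1 a \<in> Phi M1 M2 \<longleftrightarrow> a \<in> M1 \<and> a \<noteq> f1"
  by (auto simp: Phi_def)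
lemma Phi_E2: "(f1 \<in> M1 \<longleftrightarrow> f2 \<in> M2) \<Longrightarrow> E2 b \<in> Phi M1 M2 \<longleftrightarrow> b \<in> M2 \<and> b \<noteq> f2"
  by (auto simp: Phi_def)
lemma Phi_XX: "XX \<in> Phi M1 M2 \<longleftrightarrow> f1 \<in> M1" "YY \<in> Phi M1 M2 \<longleftrightarrow> f1 \<in> M1"
  by (auto simp: Phi_def)

lemma r1_mem: "a \<in> r1 M \<longleftrightarrow> E1 a \<in> M \<or> (XX \<in> M \<and> a = f1)"
  by (auto simp: r1_def)
lemma r2_mem: "b \<in> r2 M \<longleftrightarrow> E2 b \<in> M \<or> (XX \<in> M \<and> b = f2)"
  by (auto simp: r2_def)

lemma E1f1: "perfect_matching G M \<Longrightarrow> E1 f1 \<notin> M"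
  by (auto simp: perfect_matching_def)
lemma E2f2: "perfect_matching G M \<Longrightarrow> E2 f2 \<notin> M"
  by (auto simp: perfect_matching_def)

lemma B1: assumes pm: "perfect_matching G M" shows "perfect_matching G1 (r1 M)"
  unfolding pm_ex1
proof
  have ME: "M \<subseteq> edges G" using pm by (simp add: perfect_matching_def)
  show "r1 M \<subseteq> edges G1" using ME f1 by (auto simp: r1_def)
  show "\<forall>w\<in>verts G1. \<exists>!a. a \<in> r1 M \<and> w \<in> ends G1 a"
  proof
    fix w assume w: "w \<in> verts G1"
    then have wV: "Inl w \<in> verts G" by simp
    obtain e where e: "e \<in> M" "Inl w \<in> ends G e" using pm wV unfolding pm_ex1 by blast
    have par: "XX \<in> M \<longleftrightarrow> YY \<in> M" using parity[OF pm] .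
    have eE: "e \<in> edges G" using e(1) ME by blast
    show "\<exists>!a. a \<in> r1 M \<and> w \<in> ends G1 a"
      using cedge_cases[OF eE]
    proof (elim disjE exE conjE)
      fix a assume ea: "e = E1 a"
      show ?thesis
      proof
        show "a \<in> r1 M \<and> w \<in> ends G1 a" using e ea by (simp add: r1_mem)
        fix a' assume a': "a' \<in> r1 M \<and> w \<in> ends G1 a'"
        show "a' = a"
        proof (cases "E1 a' \<in> M")
          case True
          then have "E1 a' = e" using pm_unique_at[OF pm wV True e(1)] a' e(2) by simp
          then show ?thesis using ea by simp
        next
          case False
          then have a'f: "a' = f1" "XX \<in> M" using a' by (auto simp: r1_mem)
          then have "w = x1 \<or> w = y1" using a' e1 by auto
          then show ?thesis
          proof
            assume "w = x1"
            then have "XX = e" using pm_unique_at[OF pm wV a'f(2) e(1)] e(2) by simp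
            then show ?thesis using ea by simp
          next
            assume "w = y1"
            moreover have "YY \<in> M" using par a'f(2) by simp
            ultimately have "YY = e" using pm_unique_at[OF pm wV _ e(1)] e(2) by simp
            then show ?thesis using ea by simp
          qed
        qed
      qed
    next
      fix b assume "e = E2 b"
      then show ?thesis using e(2) by simp
    next
      assume eX: "e = XX"
      then have wx: "w = x1" using e(2) by simp
      show ?thesis
      proof
        show "f1 \<in> r1 M \<and> w \<in> ends G1 f1" using e eX wx e1 by (simp add: r1_mem)
        fix a' assume a': "a' \<in> r1 M \<and> w \<in> ends G1 a'"
        show "a' = f1"
        proof (rule ccontr)
          assume "a' \<noteq> f1"
          then have "E1 a' \<in> M" using a' by (auto simp: r1_mem)
          then have "E1 a' = e" using pm_unique_at[OF pm wV _ e(1)] a' e(2) by simp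
          then show False using eX by simp
        qed
      qed
    next
      assume eY: "e = YY"
      then have wy: "w = y1" using e(2) by simp
      have XM: "XX \<in> M" using par e(1) eY by simp
      show ?thesis
      proof
        show "f1 \<in> r1 M \<and> w \<in> ends G1 f1" using XM wy e1 by (simp add: r1_mem)
        fix a' assume a': "a' \<in> r1 M \<and> w \<in> ends G1 a'"
        show "a' = f1"
        proof (rule ccontr)
          assume "a' \<noteq> f1"
          then have "E1 a' \<in> M" using a' by (auto simp: r1_mem)
          then have "E1 a' = e" using pm_unique_at[OF pm wV _ e(1)] a' e(2) by simp
          then show False using eY by simp
        qed
      qed
    qed
  qed
qed

lemma B2: assumes pm: "perfect_matching G M" shows "perfect_matching G2 (r2 M)"
  unfolding pm_ex1
proof
  have ME: "M \<subseteq> edges G" using pm by (simp add: perfect_matching_def)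
  show "r2 M \<subseteq> edges G2" using ME f2 by (auto simp: r2_def)
  show "\<forall>w\<in>verts G2. \<exists>!a. a \<in> r2 M \<and> w \<in> ends G2 a"
  proof
    fix w assume w: "w \<in> verts G2"
    then have wV: "Inr w \<in> verts G" by simp
    obtain e where e: "e \<in> M" "Inr w \<in> ends G e" using pm wV unfolding pm_ex1 by blast
    have par: "XX \<in> M \<longleftrightarrow> YY \<in> M" using parity[OF pm] .
    have eE: "e \<in> edges G" using e(1) ME by blast
    show "\<exists>!a. a \<in> r2 M \<and> w \<in> ends G2 a"
      using cedge_cases[OF eE]
    proof (elim disjE exE conjE)
      fix b assume "e = E1 b"
      then show ?thesis using e(2) by simp
    next
      fix a assume ea: "e = E2 a"
      show ?thesis
      proof
        show "a \<in> r2 M \<and> w \<in> ends G2 a" using e ea by (simp add: r2_mem)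
        fix a' assume a': "a' \<in> r2 M \<and> w \<in> ends G2 a'"
        show "a' = a"
        proof (cases "E2 a' \<in> M")
          case True
          then have "E2 a' = e" using pm_unique_at[OF pm wV True e(1)] a' e(2) by simp
          then show ?thesis using ea by simp
        next
          case False
          then have a'f: "a' = f2" "XX \<in> M" using a' by (auto simp: r2_mem)
          then have "w = x2 \<or> w = y2" using a' e2 by auto
          then show ?thesis
          proof
            assume "w = x2"
            then have "XX = e" using pm_unique_at[OF pm wV a'f(2) e(1)] e(2) by simp
            then show ?thesis using ea by simp
          next
            assume "w = y2"
            moreover have "YY \<in> M" using par a'f(2) by simp
            ultimately have "YY = e" using pm_unique_at[OF pm wV _ e(1)] e(2) by simp
            then show ?thesis using ea by simp
          qed
        qed
      qed
    next
      assume eX: "e = XX"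
      then have wx: "w = x2" using e(2) by simp
      show ?thesis
      proof
        show "f2 \<in> r2 M \<and> w \<in> ends G2 f2" using e eX wx e2 by (simp add: r2_mem)
        fix a' assume a': "a' \<in> r2 M \<and> w \<in> ends G2 a'"
        show "a' = f2"
        proof (rule ccontr)
          assume "a' \<noteq> f2"
          then have "E2 a' \<in> M" using a' by (auto simp: r2_mem)
          then have "E2 a' = e" using pm_unique_at[OF pm wV _ e(1)] a' e(2) by simp
          then show False using eX by simp
        qed
      qed
    next
      assume eY: "e = YY"
      then have wy: "w = y2" using e(2) by simp
      have XM: "XX \<in> M" using par e(1) eY by simp
      show ?thesis
      proof
        show "f2 \<in> r2 M \<and> w \<in> ends G2 f2" using XM wy e2 by (simp add: r2_mem)
        fix a' assume a': "a' \<in> r2 M \<and> w \<in> ends G2 a'"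
        show "a' = f2"
        proof (rule ccontr)
          assume "a' \<noteq> f2"
          then have "E2 a' \<in> M" using a' by (auto simp: r2_mem)
          then have "E2 a' = e" using pm_unique_at[OF pm wV _ e(1)] a' e(2) by simp
          then show False using eY by simp
        qed
      qed
    qed
  qed
qed

lemma r_f: "perfect_matching G M \<Longrightarrow> (f1 \<in> r1 M \<longleftrightarrow> XX \<in> M) \<and> (f2 \<in> r2 M \<longleftrightarrow> XX \<in> M)"
  using E1f1 E2f2 by (auto simp: r1_mem r2_mem)

end

context ccx begin

lemma F: assumes P: "(M1, M2) \<in> PP" shows "perfect_matching G (Phi M1 M2)"
proof -
  have pm1: "perfect_matching G1 M1" and pm2: "perfect_matching G2 M2" and iff: "f1 \<in> M1 \<longleftrightarrow> f2 \<in> M2"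
    using P by (auto simp: PP_def)
  have M1E: "M1 \<subseteq> edges G1" using pm1 by (simp add: perfect_matching_def)
  have M2E: "M2 \<subseteq> edges G2" using pm2 by (simp add: perfect_matching_def)
  have sub: "Phi M1 M2 \<subseteq> edges G"
  proof
    fix e assume e: "e \<in> Phi M1 M2"
    show "e \<in> edges G"
    proof (cases e)
      case (E1 a) then show ?thesis using e M1E by (auto simp: Phi_E1)
    next
      case (E2 b) then show ?thesis using e M2E iff by (auto simp: Phi_E2[OF iff])
    qed auto
  qed
  have ex1: "\<exists>!e. e \<in> Phi M1 M2 \<and> v \<in> ends G e" if v: "v \<in> verts G" for v
  proof -
    consider (L) w where "v = Inl w" "w \<in> verts G1" | (R) w where "v = Inr w" "w \<in> verts G2"
      using v by (auto simp: vG)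
    then show ?thesis
    proof cases
      case L
      obtain a where a: "a \<in> M1" "w \<in> ends G1 a" using pm1 L(2) unfolding pm_ex1 by blast
      have ua: "a' = a" if "a' \<in> M1" "w \<in> ends G1 a'" for a'
        using pm_unique_at[OF pm1 L(2) that(1) a(1) that(2) a(2)] .
      show ?thesis
      proof (cases "a = f1")
        case True
        then have w: "w = x1 \<or> w = y1" using a(2) e1 by auto
        have fM: "f1 \<in> M1" using a True by simp
        show ?thesis using w
        proof
          assume wx: "w = x1"
          show ?thesis
          proof
            show "XX \<in> Phi M1 M2 \<and> v \<in> ends G XX" using fM L wx by (simp add: Phi_XX)
            fix e assume e: "e \<in> Phi M1 M2 \<and> v \<in> ends G e"
            show "e = XX"
            proof (cases e)
              case (E1 a')
              then have "a' \<in> M1" "a' \<noteq> f1" "w \<in> ends G1 a'" using e L by (auto simp: Phi_E1)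
              then show ?thesis using ua True by blast
            next
              case (E2 b) then show ?thesis using e L by simp
            next
              case YY then show ?thesis using e L wx xy1 by simp
            qed simp
          qed
        next
          assume wy: "w = y1"
          show ?thesis
          proof
            show "YY \<in> Phi M1 M2 \<and> v \<in> ends G YY" using fM L wy by (simp add: Phi_XX)
            fix e assume e: "e \<in> Phi M1 M2 \<and> v \<in> ends G e"
            show "e = YY"
            proof (cases e)
              case (E1 a')
              then have "a' \<in> M1" "a' \<noteq> f1" "w \<in> ends G1 a'" using e L by (auto simp: Phi_E1)
              then show ?thesis using ua True by blast
            next
              case (E2 b) then show ?thesis using e L by simp
            next
              case XX then show ?thesis using e L wy xy1 by simp
            qed simp
          qed
        qed
      next
        case False
        have wf: "w \<notin> ends G1 f1" if "f1 \<in> M1"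
        proof
          assume "w \<in> ends G1 f1"
          then have "f1 = a" using ua that by blast
          then show False using False by simp
        qed
        show ?thesis
        proof
          show "E1 a \<in> Phi M1 M2 \<and> v \<in> ends G (E1 a)" using a False L by (simp add: Phi_E1)
          fix e assume e: "e \<in> Phi M1 M2 \<and> v \<in> ends G e"
          show "e = E1 a"
          proof (cases e)
            case (E1 a')
            then have "a' \<in> M1" "w \<in> ends G1 a'" using e L by (auto simp: Phi_E1)
            then show ?thesis using ua E1 by blast
          next
            case (E2 b) then show ?thesis using e L by simp
          next
            case XX then show ?thesis using e L wf e1 by (simp add: Phi_XX)
          next
            case YY then show ?thesis using e L wf e1 by (simp add: Phi_XX)
          qed
        qed
      qed
    next
      case R
      obtain a where a: "a \<in> M2" "w \<in> ends G2 a" using pm2 R(2) unfolding pm_ex1 by blast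
      have ua: "a' = a" if "a' \<in> M2" "w \<in> ends G2 a'" for a'
        using pm_unique_at[OF pm2 R(2) that(1) a(1) that(2) a(2)] .
      show ?thesis
      proof (cases "a = f2")
        case True
        then have w: "w = x2 \<or> w = y2" using a(2) e2 by auto
        have fM: "f1 \<in> M1" using a True iff by simp
        show ?thesis using w
        proof
          assume wx: "w = x2"
          show ?thesis
          proof
            show "XX \<in> Phi M1 M2 \<and> v \<in> ends G XX" using fM R wx by (simp add: Phi_XX)
            fix e assume e: "e \<in> Phi M1 M2 \<and> v \<in> ends G e"
            show "e = XX"
            proof (cases e)
              case (E2 a')
              then have "a' \<in> M2" "a' \<noteq> f2" "w \<in> ends G2 a'" using e R by (auto simp: Phi_E2[OF iff])
              then show ?thesis using ua True by blast
            next
              case (E1 b) then show ?thesis using e R by simp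
            next
              case YY then show ?thesis using e R wx xy2 by simp
            qed simp
          qed
        next
          assume wy: "w = y2"
          show ?thesis
          proof
            show "YY \<in> Phi M1 M2 \<and> v \<in> ends G YY" using fM R wy by (simp add: Phi_XX)
            fix e assume e: "e \<in> Phi M1 M2 \<and> v \<in> ends G e"
            show "e = YY"
            proof (cases e)
              case (E2 a')
              then have "a' \<in> M2" "a' \<noteq> f2" "w \<in> ends G2 a'" using e R by (auto simp: Phi_E2[OF iff])
              then show ?thesis using ua True by blast
            next
              case (E1 b) then show ?thesis using e R by simp
            next
              case XX then show ?thesis using e R wy xy2 by simp
            qed simp
          qed
        qed
      next
        case False
        have wf: "w \<notin> ends G2 f2" if "f2 \<in> M2"
        proof
          assume "w \<in> ends G2 f2"
          then have "f2 = a" using ua that by blast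
          then show False using False by simp
        qed
        show ?thesis
        proof
          show "E2 a \<in> Phi M1 M2 \<and> v \<in> ends G (E2 a)" using a False R by (simp add: Phi_E2[OF iff])
          fix e assume e: "e \<in> Phi M1 M2 \<and> v \<in> ends G e"
          show "e = E2 a"
          proof (cases e)
            case (E2 a')
            then have "a' \<in> M2" "w \<in> ends G2 a'" using e R by (auto simp: Phi_E2[OF iff])
            then show ?thesis using ua E2 by blast
          next
            case (E1 b) then show ?thesis using e R by simp
          next
            case XX then show ?thesis using e R wf e2 iff by (simp add: Phi_XX)
          next
            case YY then show ?thesis using e R wf e2 iff by (simp add: Phi_XX)
          qed
        qed
      qed
    qed
  qed
  show ?thesis unfolding pm_ex1 using sub ex1 by blast
qed

end


lemma card_pairs:
  assumes fP: "finite {x. P x}" and fQ: "finite {y. Q y}"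
  shows "card {(x, y). P x \<and> Q y \<and> (a x \<longleftrightarrow> b y)} =
    card {x. P x \<and> a x} * card {y. Q y \<and> b y} + card {x. P x \<and> \<not> a x} * card {y. Q y \<and> \<not> b y}"
proof -
  have eq: "{(x, y). P x \<and> Q y \<and> (a x \<longleftrightarrow> b y)} =
    {x. P x \<and> a x} \<times> {y. Q y \<and> b y} \<union> {x. P x \<and> \<not> a x} \<times> {y. Q y \<and> \<not> b y}" by auto
  have f1: "finite ({x. P x \<and> a x} \<times> {y. Q y \<and> b y})"
    using fP fQ by (intro finite_cartesian_product) (auto intro: finite_subset)
  have f2: "finite ({x. P x \<and> \<not> a x} \<times> {y. Q y \<and> \<not> b y})"
    using fP fQ by (intro finite_cartesian_product) (auto intro: finite_subset)
  have d: "({x. P x \<and> a x} \<times> {y. Q y \<and> b y}) \<inter> ({x. P x \<and> \<not> a x} \<times> {y. Q y \<and> \<not> b y}) = {}" by auto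
  show ?thesis unfolding eq card_Un_disjoint[OF f1 f2 d] card_cartesian_product ..
qed

context ccx begin

lemma r_Phi: assumes P: "(M1, M2) \<in> PP" shows "r1 (Phi M1 M2) = M1 \<and> r2 (Phi M1 M2) = M2"
proof -
  have iff: "f1 \<in> M1 \<longleftrightarrow> f2 \<in> M2" using P by (simp add: PP_def)
  have "r1 (Phi M1 M2) = M1"
    by (auto simp: r1_mem Phi_E1 Phi_XX)
  moreover have "r2 (Phi M1 M2) = M2"
    using iff by (auto simp: r2_mem Phi_E2[OF iff] Phi_XX)
  ultimately show ?thesis by simp
qed

lemma Phi_r: assumes pm: "perfect_matching G M" shows "Phi (r1 M) (r2 M) = M"
proof -
  have iff: "f1 \<in> r1 M \<longleftrightarrow> f2 \<in> r2 M" using r_f[OF pm] by simp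
  have par: "XX \<in> M \<longleftrightarrow> YY \<in> M" using parity[OF pm] .
  have n1: "E1 f1 \<notin> M" using E1f1[OF pm] .
  have n2: "E2 f2 \<notin> M" using E2f2[OF pm] .
  show ?thesis
  proof (rule set_eqI)
    fix e show "e \<in> Phi (r1 M) (r2 M) \<longleftrightarrow> e \<in> M"
    proof (cases e)
      case (E1 a) then show ?thesis using n1 by (auto simp: Phi_E1 r1_mem)
    next
      case (E2 b) then show ?thesis using n2 by (auto simp: Phi_E2[OF iff] r2_mem)
    next
      case XX then show ?thesis using r_f[OF pm] by (simp add: Phi_XX)
    next
      case YY then show ?thesis using r_f[OF pm] par by (simp add: Phi_XX)
    qed
  qed
qed

lemma count:
  "card {M. perfect_matching G M \<and> R M} = card {(M1, M2). (M1, M2) \<in> PP \<and> R (Phi M1 M2)}"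
proof -
  let ?h = "\<lambda>(M1, M2). Phi M1 M2"
  let ?S = "{(M1, M2). (M1, M2) \<in> PP \<and> R (Phi M1 M2)}"
  have inj: "inj_on ?h ?S"
  proof (rule inj_onI)
    fix p q assume p: "p \<in> ?S" and q: "q \<in> ?S" and eq: "?h p = ?h q"
    obtain a b where ab: "p = (a, b)" by (cases p)
    obtain c d where cd: "q = (c, d)" by (cases q)
    have "r1 (Phi a b) = a" "r2 (Phi a b) = b" using r_Phi p ab by auto
    moreover have "r1 (Phi c d) = c" "r2 (Phi c d) = d" using r_Phi q cd by auto
    ultimately show "p = q" using eq ab cd by auto
  qed
  have img: "?h ` ?S = {M. perfect_matching G M \<and> R M}"
  proof
    show "?h ` ?S \<subseteq> {M. perfect_matching G M \<and> R M}" using F by auto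
    show "{M. perfect_matching G M \<and> R M} \<subseteq> ?h ` ?S"
    proof
      fix M assume M: "M \<in> {M. perfect_matching G M \<and> R M}"
      then have pm: "perfect_matching G M" and RM: "R M" by auto
      have "(r1 M, r2 M) \<in> PP" using B1[OF pm] B2[OF pm] r_f[OF pm] by (simp add: PP_def)
      moreover have "Phi (r1 M) (r2 M) = M" using Phi_r[OF pm] .
      ultimately have h1: "M = ?h (r1 M, r2 M)" and h2: "(r1 M, r2 M) \<in> ?S" using RM by simp_all
      from h1 h2 show "M \<in> ?h ` ?S" by (rule image_eqI)
    qed
  qed
  show ?thesis using card_image[OF inj] img by simp
qed

lemma finpm1: "finite {M1. perfect_matching G1 M1 \<and> Q M1}" using pm_finite fin1 by blast
lemma finpm2: "finite {M2. perfect_matching G2 M2 \<and> Q M2}" using pm_finite fin2 by blast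

lemma count_E2:
  assumes "e \<noteq> f2"
  shows "card {M. perfect_matching G M \<and> E2 e \<in> M} =
    card {M1. perfect_matching G1 M1 \<and> f1 \<in> M1} * card {M2. (perfect_matching G2 M2 \<and> e \<in> M2) \<and> f2 \<in> M2}
    + card {M1. perfect_matching G1 M1 \<and> f1 \<notin> M1} * card {M2. (perfect_matching G2 M2 \<and> e \<in> M2) \<and> f2 \<notin> M2}"
proof -
  have "{(M1, M2). (M1, M2) \<in> PP \<and> E2 e \<in> Phi M1 M2} =
    {(M1, M2). perfect_matching G1 M1 \<and> (perfect_matching G2 M2 \<and> e \<in> M2) \<and> (f1 \<in> M1 \<longleftrightarrow> f2 \<in> M2)}"
    using assms by (auto simp: PP_def Phi_E2)
  then show ?thesis
    using count[of "\<lambda>M. E2 e \<in> M"] card_pairs[OF finpm1[of "\<lambda>_. True"] finpm2[of "\<lambda>M. e \<in> M"],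
        of "\<lambda>M. f1 \<in> M" "\<lambda>M. f2 \<in> M"]
    by simp
qed

lemma count_E1:
  assumes "e \<noteq> f1"
  shows "card {M. perfect_matching G M \<and> E1 e \<in> M} =
    card {M1. (perfect_matching G1 M1 \<and> e \<in> M1) \<and> f1 \<in> M1} * card {M2. perfect_matching G2 M2 \<and> f2 \<in> M2}
    + card {M1. (perfect_matching G1 M1 \<and> e \<in> M1) \<and> f1 \<notin> M1} * card {M2. perfect_matching G2 M2 \<and> f2 \<notin> M2}"
proof -
  have "{(M1, M2). (M1, M2) \<in> PP \<and> E1 e \<in> Phi M1 M2} =
    {(M1, M2). (perfect_matching G1 M1 \<and> e \<in> M1) \<and> perfect_matching G2 M2 \<and> (f1 \<in> M1 \<longleftrightarrow> f2 \<in> M2)}"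
    using assms by (auto simp: PP_def Phi_E1)
  then show ?thesis
    using count[of "\<lambda>M. E1 e \<in> M"] card_pairs[OF finpm1[of "\<lambda>M. e \<in> M"] finpm2[of "\<lambda>_. True"],
        of "\<lambda>M. f1 \<in> M" "\<lambda>M. f2 \<in> M"]
    by simp
qed

lemma count_XX:
  "card {M. perfect_matching G M \<and> XX \<in> M} =
    card {M1. perfect_matching G1 M1 \<and> f1 \<in> M1} * card {M2. perfect_matching G2 M2 \<and> f2 \<in> M2}"
  "card {M. perfect_matching G M \<and> YY \<in> M} =
    card {M1. perfect_matching G1 M1 \<and> f1 \<in> M1} * card {M2. perfect_matching G2 M2 \<and> f2 \<in> M2}"
proof -
  have "{(M1, M2). (M1, M2) \<in> PP \<and> XX \<in> Phi M1 M2} =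
    {M1. perfect_matching G1 M1 \<and> f1 \<in> M1} \<times> {M2. perfect_matching G2 M2 \<and> f2 \<in> M2}"
    by (auto simp: PP_def Phi_XX)
  then show "card {M. perfect_matching G M \<and> XX \<in> M} =
    card {M1. perfect_matching G1 M1 \<and> f1 \<in> M1} * card {M2. perfect_matching G2 M2 \<and> f2 \<in> M2}"
    using count[of "\<lambda>M. XX \<in> M"] by (simp add: card_cartesian_product)
  have "{(M1, M2). (M1, M2) \<in> PP \<and> YY \<in> Phi M1 M2} =
    {M1. perfect_matching G1 M1 \<and> f1 \<in> M1} \<times> {M2. perfect_matching G2 M2 \<and> f2 \<in> M2}"
    by (auto simp: PP_def Phi_XX)
  then show "card {M. perfect_matching G M \<and> YY \<in> M} =
    card {M1. perfect_matching G1 M1 \<and> f1 \<in> M1} * card {M2. perfect_matching G2 M2 \<and> f2 \<in> M2}"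
    using count[of "\<lambda>M. YY \<in> M"] by (simp add: card_cartesian_product)
qed

end


lemma nat_two_two: "(x::nat) \<ge> 2 \<Longrightarrow> y \<ge> 2 \<Longrightarrow> x * c + y * d \<noteq> 1"
proof (cases c)
  case 0
  assume "x \<ge> 2" "y \<ge> 2"
  then show ?thesis using 0 by (cases d) auto
next
  case (Suc c')
  assume "x \<ge> 2" "y \<ge> 2"
  then have "x * c \<ge> 2" using Suc by (metis le_trans mult_le_mono1 mult_1 Suc_le_eq zero_less_Suc mult.commute le_add1 mult_Suc_right)
  then show ?thesis by linarith
qed

lemma filt1: assumes "\<And>M. P M \<Longrightarrow> M = N" "P N" "Q N" shows "{M. P M \<and> Q M} = {N}"
proof (rule set_eqI)
  fix M show "M \<in> {M. P M \<and> Q M} \<longleftrightarrow> M \<in> {N}"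
  proof
    assume "M \<in> {M. P M \<and> Q M}" then have "P M" by simp
    then have "M = N" by (rule assms(1))
    then show "M \<in> {N}" by simp
  next
    assume "M \<in> {N}" then have "M = N" by simp
    then show "M \<in> {M. P M \<and> Q M}" using assms(2,3) by simp
  qed
qed

lemma filt0: assumes "\<And>M. P M \<Longrightarrow> M = N" "\<not> Q N" shows "{M. P M \<and> Q M} = {}"
proof -
  have "\<not> (P M \<and> Q M)" for M
  proof
    assume "P M \<and> Q M"
    then have "M = N" "Q M" using assms(1) by auto
    then show False using assms(2) by simp
  qed
  then show ?thesis by blast
qed

lemma card_split:
  assumes "finite {M. P M}"
  shows "card {M. P M} = card {M. P M \<and> Q M} + card {M. P M \<and> \<not> Q M}"
proof -
  have "{M. P M} = {M. P M \<and> Q M} \<union> {M. P M \<and> \<not> Q M}" by auto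
  moreover have "finite {M. P M \<and> Q M}" "finite {M. P M \<and> \<not> Q M}" using assms by (auto intro: finite_subset)
  ultimately show ?thesis by (simp add: card_Un_disjoint[symmetric]) (metis (no_types, lifting) card_Un_disjoint disjoint_iff mem_Collect_eq)
qed

context ccx begin

lemma main:
  assumes bl1: "bridgeless G1" and bl2: "bridgeless G2"
  shows
    "(lonely G1 f1 \<longrightarrow>
        (\<forall>e\<in>edges G2. e \<noteq> f2 \<longrightarrow> lonely G2 e \<longrightarrow>
            (lonely G (E2 e) \<longleftrightarrow> f2 \<in> (THE M. perfect_matching G2 M \<and> e \<in> M))) \<and>
        (lonely G2 f2 \<longrightarrow> lonely G XX \<and> lonely G YY))
     \<and> (\<not> lonely G1 f1 \<longrightarrow>
        (\<forall>e\<in>edges G2 - {f2}. \<not> lonely G (E2 e)) \<and> \<not> lonely G XX \<and> \<not> lonely G YY)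
     \<and> (\<forall>e\<in>edges G1 - {f1}. \<not> lonely G1 e \<longrightarrow> \<not> lonely G (E1 e))
     \<and> (\<forall>e\<in>edges G2 - {f2}. \<not> lonely G2 e \<longrightarrow> \<not> lonely G (E2 e))"
proof -
  define a1 where "a1 = card {M1. perfect_matching G1 M1 \<and> f1 \<in> M1}"
  define b1 where "b1 = card {M1. perfect_matching G1 M1 \<and> f1 \<notin> M1}"
  define a2 where "a2 = card {M2. perfect_matching G2 M2 \<and> f2 \<in> M2}"
  define b2 where "b2 = card {M2. perfect_matching G2 M2 \<and> f2 \<notin> M2}"
  have a1: "a1 \<ge> 1" unfolding a1_def by (rule one_contain[OF cub1 bl1 f1])
  have a2: "a2 \<ge> 1" unfolding a2_def by (rule one_contain[OF cub2 bl2 f2])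
  have b1: "b1 \<ge> 2" unfolding b1_def by (rule two_avoid[OF cub1 bl1 f1])
  have b2: "b2 \<ge> 2" unfolding b2_def by (rule two_avoid[OF cub2 bl2 f2])
  have l1: "lonely G1 f1 \<longleftrightarrow> a1 = 1" using f1 by (simp add: lonely_def a1_def)
  have l2: "lonely G2 f2 \<longleftrightarrow> a2 = 1" using f2 by (simp add: lonely_def a2_def)
  have lXX: "lonely G XX \<longleftrightarrow> a1 * a2 = 1" "lonely G YY \<longleftrightarrow> a1 * a2 = 1"
    using count_XX by (simp_all add: lonely_def a1_def a2_def)
  have cE2: "card {M. perfect_matching G M \<and> E2 e \<in> M} =
    a1 * card {M2. (perfect_matching G2 M2 \<and> e \<in> M2) \<and> f2 \<in> M2}
    + b1 * card {M2. (perfect_matching G2 M2 \<and> e \<in> M2) \<and> f2 \<notin> M2}" if "e \<noteq> f2" for e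
    using count_E2[OF that] by (simp add: a1_def b1_def)
  have cE1: "card {M. perfect_matching G M \<and> E1 e \<in> M} =
    card {M1. (perfect_matching G1 M1 \<and> e \<in> M1) \<and> f1 \<in> M1} * a2
    + card {M1. (perfect_matching G1 M1 \<and> e \<in> M1) \<and> f1 \<notin> M1} * b2" if "e \<noteq> f1" for e
    using count_E1[OF that] by (simp add: a2_def b2_def)
  have lE2: "lonely G (E2 e) \<longleftrightarrow> card {M. perfect_matching G M \<and> E2 e \<in> M} = 1"
    if "e \<in> edges G2" "e \<noteq> f2" for e using that by (simp add: lonely_def)
  have lE1: "lonely G (E1 e) \<longleftrightarrow> card {M. perfect_matching G M \<and> E1 e \<in> M} = 1"
    if "e \<in> edges G1" "e \<noteq> f1" for e using that by (simp add: lonely_def)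
  have P1: "lonely G1 f1 \<longrightarrow>
        (\<forall>e\<in>edges G2. e \<noteq> f2 \<longrightarrow> lonely G2 e \<longrightarrow>
            (lonely G (E2 e) \<longleftrightarrow> f2 \<in> (THE M. perfect_matching G2 M \<and> e \<in> M))) \<and>
        (lonely G2 f2 \<longrightarrow> lonely G XX \<and> lonely G YY)"
  proof (intro impI conjI ballI)
    assume "lonely G1 f1"
    then have a11: "a1 = 1" using l1 by simp
    fix e assume e: "e \<in> edges G2" "e \<noteq> f2" "lonely G2 e"
    then have "card {M. perfect_matching G2 M \<and> e \<in> M} = 1" by (simp add: lonely_def)
    then have ex: "\<exists>!M. perfect_matching G2 M \<and> e \<in> M" by (simp only: card_eq1_iff_ex1)
    then obtain N where N: "perfect_matching G2 N" "e \<in> N" "\<And>M. perfect_matching G2 M \<and> e \<in> M \<Longrightarrow> M = N"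
      by blast
    have TH: "(THE M. perfect_matching G2 M \<and> e \<in> M) = N"
    proof (rule the_equality)
      show "perfect_matching G2 N \<and> e \<in> N" using N(1,2) by simp
      show "\<And>M. perfect_matching G2 M \<and> e \<in> M \<Longrightarrow> M = N" by (rule N(3))
    qed
    show "lonely G (E2 e) \<longleftrightarrow> f2 \<in> (THE M. perfect_matching G2 M \<and> e \<in> M)"
    proof (cases "f2 \<in> N")
      case True
      have s1: "{M2. (perfect_matching G2 M2 \<and> e \<in> M2) \<and> f2 \<in> M2} = {N}"
        using filt1[of "\<lambda>M. perfect_matching G2 M \<and> e \<in> M" N "\<lambda>M. f2 \<in> M", OF N(3)] N(1,2) True by simp
      have s2: "{M2. (perfect_matching G2 M2 \<and> e \<in> M2) \<and> f2 \<notin> M2} = {}"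
        using filt0[of "\<lambda>M. perfect_matching G2 M \<and> e \<in> M" N "\<lambda>M. f2 \<notin> M", OF N(3)] True by simp
      have "card {M. perfect_matching G M \<and> E2 e \<in> M} = 1"
        unfolding cE2[OF e(2)] s1 s2 a11 by simp
      then show ?thesis using lE2[OF e(1,2)] TH True by simp
    next
      case False
      have s1: "{M2. (perfect_matching G2 M2 \<and> e \<in> M2) \<and> f2 \<in> M2} = {}"
        using filt0[of "\<lambda>M. perfect_matching G2 M \<and> e \<in> M" N "\<lambda>M. f2 \<in> M", OF N(3)] False by simp
      have s2: "{M2. (perfect_matching G2 M2 \<and> e \<in> M2) \<and> f2 \<notin> M2} = {N}"
        using filt1[of "\<lambda>M. perfect_matching G2 M \<and> e \<in> M" N "\<lambda>M. f2 \<notin> M", OF N(3)] N(1,2) False by simp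
      have "card {M. perfect_matching G M \<and> E2 e \<in> M} = b1"
        unfolding cE2[OF e(2)] s1 s2 by simp
      then show ?thesis using lE2[OF e(1,2)] TH False b1 by simp
    qed
  next
    assume "lonely G1 f1" "lonely G2 f2"
    then show "lonely G XX" using l1 l2 lXX by simp
  next
    assume "lonely G1 f1" "lonely G2 f2"
    then show "lonely G YY" using l1 l2 lXX by simp
  qed
  have P2: "\<not> lonely G1 f1 \<longrightarrow>
        (\<forall>e\<in>edges G2 - {f2}. \<not> lonely G (E2 e)) \<and> \<not> lonely G XX \<and> \<not> lonely G YY"
  proof (intro impI conjI ballI)
    assume "\<not> lonely G1 f1"
    then have a12: "a1 \<ge> 2" using l1 a1 by simp
    fix e assume e: "e \<in> edges G2 - {f2}"
    show "\<not> lonely G (E2 e)"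
      using lE2[of e] e cE2[of e] nat_two_two[OF a12 b1] by simp
  next
    assume "\<not> lonely G1 f1"
    then have a12: "a1 \<ge> 2" using l1 a1 by simp
    then show "\<not> lonely G XX" "\<not> lonely G YY" using lXX by simp_all
  qed
  have P3: "\<forall>e\<in>edges G1 - {f1}. \<not> lonely G1 e \<longrightarrow> \<not> lonely G (E1 e)"
  proof (intro ballI impI)
    fix e assume e: "e \<in> edges G1 - {f1}" and nl: "\<not> lonely G1 e"
    define c where "c = card {M1. (perfect_matching G1 M1 \<and> e \<in> M1) \<and> f1 \<in> M1}"
    define d where "d = card {M1. (perfect_matching G1 M1 \<and> e \<in> M1) \<and> f1 \<notin> M1}"
    have "card {M. perfect_matching G1 M \<and> e \<in> M} = c + d"
      unfolding c_def d_def by (rule card_split) (rule finpm1)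
    then have cd: "c + d \<noteq> 1" using nl e by (simp add: lonely_def)
    show "\<not> lonely G (E1 e)"
    proof
      assume "lonely G (E1 e)"
      then have eq: "c * a2 + d * b2 = 1" using lE1[of e] e cE1[of e] by (simp add: c_def d_def)
      have "d = 0"
      proof (rule ccontr)
        assume "d \<noteq> 0"
        then have "1 * b2 \<le> d * b2" by (intro mult_le_mono1) simp
        then show False using eq b2 by linarith
      qed
      then have "c * a2 = 1" using eq by simp
      then have "c = 1" by simp
      then show False using cd \<open>d = 0\<close> by simp
    qed
  qed
  have P4: "\<forall>e\<in>edges G2 - {f2}. \<not> lonely G2 e \<longrightarrow> \<not> lonely G (E2 e)"
  proof (intro ballI impI)
    fix e assume e: "e \<in> edges G2 - {f2}" and nl: "\<not> lonely G2 e"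
    define c where "c = card {M2. (perfect_matching G2 M2 \<and> e \<in> M2) \<and> f2 \<in> M2}"
    define d where "d = card {M2. (perfect_matching G2 M2 \<and> e \<in> M2) \<and> f2 \<notin> M2}"
    have "card {M. perfect_matching G2 M \<and> e \<in> M} = c + d"
      unfolding c_def d_def by (rule card_split) (rule finpm2)
    then have cd: "c + d \<noteq> 1" using nl e by (simp add: lonely_def)
    show "\<not> lonely G (E2 e)"
    proof
      assume "lonely G (E2 e)"
      then have eq: "a1 * c + b1 * d = 1" using lE2[of e] e cE2[of e] by (simp add: c_def d_def)
      have "d = 0"
      proof (rule ccontr)
        assume "d \<noteq> 0"
        then have "b1 * 1 \<le> b1 * d" by (intro mult_le_mono2) simp
        then show False using eq b1 by linarith
      qed
      then have "a1 * c = 1" using eq by simp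
      then have "c = 1" by simp
      then show False using cd \<open>d = 0\<close> by simp
    qed
  qed
  show ?thesis using P1 P2 P3 P4 by blast
qed

end

theorem mainTheorem2:
  fixes G1 :: "('v1,'e1) mgraph" and G2 :: "('v2,'e2) mgraph"
  assumes "cubic G1" and "bridgeless G1" and "cubic G2" and "bridgeless G2"
    and "f1 \<in> edges G1" and "ends G1 f1 = {x1, y1}"
    and "f2 \<in> edges G2" and "ends G2 f2 = {x2, y2}"
    and "G = cut_conn G1 f1 x1 y1 G2 f2 x2 y2"
  shows
    "(lonely G1 f1 \<longrightarrow>
        (\<forall>e\<in>edges G2. e \<noteq> f2 \<longrightarrow> lonely G2 e \<longrightarrow>
            (lonely G (E2 e) \<longleftrightarrow> f2 \<in> (THE M. perfect_matching G2 M \<and> e \<in> M))) \<and>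
        (lonely G2 f2 \<longrightarrow> lonely G XX \<and> lonely G YY))
     \<and> (\<not> lonely G1 f1 \<longrightarrow>
        (\<forall>e\<in>edges G2 - {f2}. \<not> lonely G (E2 e)) \<and> \<not> lonely G XX \<and> \<not> lonely G YY)
     \<and> (\<forall>e\<in>edges G1 - {f1}. \<not> lonely G1 e \<longrightarrow> \<not> lonely G (E1 e))
     \<and> (\<forall>e\<in>edges G2 - {f2}. \<not> lonely G2 e \<longrightarrow> \<not> lonely G (E2 e))"
proof -
  interpret ccx G1 G2 f1 x1 y1 f2 x2 y2 G
    using assms by unfold_locales simp_all
  show ?thesis by (rule main[OF assms(2) assms(4)])
qed

end
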